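(* Let $A$ be either a complete filtered associative algebra or a complete filtered Lie algebra over a field $\mathbb{K}$ of characteristic zero, and let $P:A\to A$ be a linear map preserving the filtration; put $\tilde P:=\mathrm{id}_A-P$. Let $\chi:A_1\to A_1$ be the BCH-recursion map associated to $P$, and define $D_P:A_1\to A_1\times A_1$ by $D_P(a)=\big(P(\chi(a)),\tilde P(\chi(a))\big)$. Then: (1) for every $a\in A_1$, $\exp(a)=\exp\big(P(\chi(a))\big)\exp\big(\tilde P(\chi(a))\big)$; (2) $D_P$ is a right inverse of $C:A_1\times A_1\to A_1$, i.e. $C\circ D_P=\mathrm{id}_{A_1}$; (3) $C$ restricts to a bijection $C:D_P(A_1)\to A_1$; (4) for every subset $B\subseteq A_1$, $C$ restricts to a bijection $C:D_P(B)\to B$.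
   Context: A complete filtered associative algebra is an associative algebra $A$ with a decreasing filtration $A=A_0\supseteq A_1\supseteq\cdots$ by subalgebras with $A_mA_n\subseteq A_{m+n}$ and $A\cong\varprojlim A/A_n$; a complete filtered Lie algebra is defined analogously with $[A_m,A_n]\subseteq A_{m+n}$. $\mathrm{BCH}(x,y)$ is the Baker--Campbell--Hausdorff Lie series defined by $\exp(x)\exp(y)=\exp(x+y+\mathrm{BCH}(x,y))$, and $C(u,v):=u+v+\mathrm{BCH}(u,v)$, which converges in $A_1$ for $u,v\in A_1$ in both cases. In the Lie algebra case, exponentials are taken in the completion of the universal enveloping algebra with the induced filtration. The BCH-recursion map $\chi:A_1\to A_1$ is defined by $\chi(a)=\lim_{n\to\infty}\chi_{(n)}(a)$ (limit in the filtration topology), where $\chi_{(0)}(a)=a$ and $\chi_{(n+1)}(a)=a-\mathrm{BCH}\big(P(\chi_{(n)}(a)),\tilde P(\chi_{(n)}(a))\big)$; it is the unique map $A_1\to A_1$ satisfying $\chi(a)=a-\mathrm{BCH}\big(P(\chi(a)),\tilde P(\chi(a))\big)$, equivalently $a=C\big(P(\chi(a)),\tilde P(\chi(a))\big)$. *)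

theory Defs
  imports Main "HOL.Vector_Spaces"
begin

text \<open>The algebra A is the whole type; the filtration is F :: nat => set, with F 0 = UNIV.
  Convergence is in the filtration topology.\<close>

definition fconv :: "(nat \<Rightarrow> 'a::ab_group_add set) \<Rightarrow> (nat \<Rightarrow> 'a) \<Rightarrow> 'a \<Rightarrow> bool" where
  "fconv F s L \<longleftrightarrow> (\<forall>k. \<exists>N. \<forall>n\<ge>N. s n - L \<in> F k)"

definition flim :: "(nat \<Rightarrow> 'a::ab_group_add set) \<Rightarrow> (nat \<Rightarrow> 'a) \<Rightarrow> 'a" where
  "flim F s = (THE L. fconv F s L)"

definition fsuminf :: "(nat \<Rightarrow> 'a::ab_group_add set) \<Rightarrow> (nat \<Rightarrow> 'a) \<Rightarrow> 'a" where
  "fsuminf F f = flim F (\<lambda>n. \<Sum>i<n. f i)"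

definition filtration :: "('k::field_char_0 \<Rightarrow> 'a::ab_group_add \<Rightarrow> 'a) \<Rightarrow> (nat \<Rightarrow> 'a set) \<Rightarrow> bool" where
  "filtration scale F \<longleftrightarrow> F 0 = UNIV \<and> (\<forall>n. F (Suc n) \<subseteq> F n) \<and>
     (\<forall>n. 0 \<in> F n \<and> (\<forall>x\<in>F n. \<forall>y\<in>F n. x + y \<in> F n) \<and> (\<forall>c. \<forall>x\<in>F n. scale c x \<in> F n))"

text \<open>Completeness: the canonical map A -> lim A/A_n is bijective. An element of the
  inverse limit is represented by a sequence x with x (n+1) = x n mod A_n; bijectivity says
  that there is exactly one a with a = x n mod A_n for all n.\<close>
definition complete_filtration :: "(nat \<Rightarrow> 'a::ab_group_add set) \<Rightarrow> bool" where
  "complete_filtration F \<longleftrightarrow>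
     (\<forall>x. (\<forall>n. x (Suc n) - x n \<in> F n) \<longrightarrow> (\<exists>!a. \<forall>n. a - x n \<in> F n))"

text \<open>Associative (not necessarily unital) algebra over the field 'k: the ring structure of
  the type 'a together with a bilinear scalar multiplication.\<close>
definition cf_assoc_algebra :: "('k::field_char_0 \<Rightarrow> 'a::ring \<Rightarrow> 'a) \<Rightarrow> (nat \<Rightarrow> 'a set) \<Rightarrow> bool" where
  "cf_assoc_algebra scale F \<longleftrightarrow>
     vector_space scale \<and>
     (\<forall>c x y. scale c (x * y) = scale c x * y \<and> scale c (x * y) = x * scale c y) \<and>
     filtration scale F \<and>
     (\<forall>m n. \<forall>x\<in>F m. \<forall>y\<in>F n. x * y \<in> F (m + n)) \<and>
     complete_filtration F"

text \<open>npow a n = a^(n+1) (no unit is assumed).\<close>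
primrec npow :: "'a::ring \<Rightarrow> nat \<Rightarrow> 'a" where
  "npow a 0 = a"
| "npow a (Suc n) = a * npow a n"

text \<open>Exponentials are taken in the unitization K x A, with product
  (l,a)(m,b) = (lm, l b + m a + a b); exp a = (1, sum_{n>=1} a^n/n!).\<close>
definition umult :: "('k::field_char_0 \<Rightarrow> 'a::ring \<Rightarrow> 'a) \<Rightarrow> 'k \<times> 'a \<Rightarrow> 'k \<times> 'a \<Rightarrow> 'k \<times> 'a" where
  "umult scale p q = (fst p * fst q, scale (fst p) (snd q) + scale (fst q) (snd p) + snd p * snd q)"

definition uexp :: "('k::field_char_0 \<Rightarrow> 'a::ring \<Rightarrow> 'a) \<Rightarrow> (nat \<Rightarrow> 'a set) \<Rightarrow> 'a \<Rightarrow> 'k \<times> 'a" where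
  "uexp scale F a = (1, fsuminf F (\<lambda>n. scale (1 / fact (Suc n)) (npow a n)))"

definition assoc_C :: "('k::field_char_0 \<Rightarrow> 'a::ring \<Rightarrow> 'a) \<Rightarrow> (nat \<Rightarrow> 'a set) \<Rightarrow> 'a \<Rightarrow> 'a \<Rightarrow> 'a" where
  "assoc_C scale F u v =
     (THE c. c \<in> F 1 \<and> uexp scale F c = umult scale (uexp scale F u) (uexp scale F v))"

definition lie_algebra :: "('k::field_char_0 \<Rightarrow> 'a::ab_group_add \<Rightarrow> 'a) \<Rightarrow> ('a \<Rightarrow> 'a \<Rightarrow> 'a) \<Rightarrow> bool" where
  "lie_algebra scale br \<longleftrightarrow>
     vector_space scale \<and>
     (\<forall>x y z. br (x + y) z = br x z + br y z \<and> br x (y + z) = br x y + br x z) \<and>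
     (\<forall>c x y. br (scale c x) y = scale c (br x y) \<and> br x (scale c y) = scale c (br x y)) \<and>
     (\<forall>x. br x x = 0) \<and>
     (\<forall>x y z. br x (br y z) + br y (br z x) + br z (br x y) = 0)"

definition cf_lie_algebra :: "('k::field_char_0 \<Rightarrow> 'a::ab_group_add \<Rightarrow> 'a) \<Rightarrow> ('a \<Rightarrow> 'a \<Rightarrow> 'a) \<Rightarrow> (nat \<Rightarrow> 'a set) \<Rightarrow> bool" where
  "cf_lie_algebra scale br F \<longleftrightarrow>
     lie_algebra scale br \<and> filtration scale F \<and>
     (\<forall>m n. \<forall>x\<in>F m. \<forall>y\<in>F n. br x y \<in> F (m + n)) \<and>
     complete_filtration F"

text \<open>The BCH Lie series via Dynkin's formula:
  C(x,y) = x + y + BCH(x,y) = sum_{n>=1} (-1)^(n-1)/n *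
     sum_{r_i+s_i>0} [x^r1 y^s1 ... x^rn y^sn] / ((sum_i (r_i+s_i)) * prod_i r_i! s_i!),
  grouped by total degree N, with right-nested brackets [z1,[z2,...[z_(k-1),z_k]...]].\<close>
fun rnest :: "('a \<Rightarrow> 'a \<Rightarrow> 'a) \<Rightarrow> 'a::zero list \<Rightarrow> 'a" where
  "rnest br [] = 0"
| "rnest br [z] = z"
| "rnest br (z # zs) = br z (rnest br zs)"

definition dynkin_words :: "nat \<Rightarrow> (nat \<times> nat) list set" where
  "dynkin_words N = {ws. ws \<noteq> [] \<and> (\<forall>p\<in>set ws. 0 < fst p + snd p) \<and>
                         (\<Sum>p\<leftarrow>ws. fst p + snd p) = N}"

definition dynkin_letters :: "'a \<Rightarrow> 'a \<Rightarrow> (nat \<times> nat) list \<Rightarrow> 'a list" where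
  "dynkin_letters x y ws = concat (map (\<lambda>p. replicate (fst p) x @ replicate (snd p) y) ws)"

definition dynkin_coeff :: "nat \<Rightarrow> (nat \<times> nat) list \<Rightarrow> 'k::field_char_0" where
  "dynkin_coeff N ws = (-1) ^ (length ws - 1) /
      (of_nat (length ws) * of_nat N * (\<Prod>p\<leftarrow>ws. fact (fst p) * fact (snd p)))"

definition dynkin_term ::
  "('k::field_char_0 \<Rightarrow> 'a::ab_group_add \<Rightarrow> 'a) \<Rightarrow> ('a \<Rightarrow> 'a \<Rightarrow> 'a) \<Rightarrow> 'a \<Rightarrow> 'a \<Rightarrow> nat \<Rightarrow> 'a" where
  "dynkin_term scale br x y N =
     (\<Sum>ws\<in>dynkin_words N. scale (dynkin_coeff N ws) (rnest br (dynkin_letters x y ws)))"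

definition lie_C ::
  "('k::field_char_0 \<Rightarrow> 'a::ab_group_add \<Rightarrow> 'a) \<Rightarrow> ('a \<Rightarrow> 'a \<Rightarrow> 'a) \<Rightarrow> (nat \<Rightarrow> 'a set) \<Rightarrow> 'a \<Rightarrow> 'a \<Rightarrow> 'a" where
  "lie_C scale br F x y = fsuminf F (dynkin_term scale br x y)"

text \<open>Given C (so BCH(x,y) = C x y - x - y) and P, with Ptilde c = c - P c:
  chi_(n+1)(a) = a - BCH(P chi_(n)(a), Ptilde chi_(n)(a)), chi(a) = lim chi_(n)(a).\<close>
definition bch_chi :: "(nat \<Rightarrow> 'a::ab_group_add set) \<Rightarrow> ('a \<Rightarrow> 'a \<Rightarrow> 'a) \<Rightarrow> ('a \<Rightarrow> 'a) \<Rightarrow> 'a \<Rightarrow> 'a" where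
  "bch_chi F C P a =
     flim F (\<lambda>n. ((\<lambda>c. a - (C (P c) (c - P c) - P c - (c - P c))) ^^ n) a)"

definition bch_D :: "(nat \<Rightarrow> 'a::ab_group_add set) \<Rightarrow> ('a \<Rightarrow> 'a \<Rightarrow> 'a) \<Rightarrow> ('a \<Rightarrow> 'a) \<Rightarrow> 'a \<Rightarrow> 'a \<times> 'a" where
  "bch_D F C P a = (P (bch_chi F C P a), bch_chi F C P a - P (bch_chi F C P a))"

end

theory Submission
  imports Defs "HOL-Computational_Algebra.Formal_Power_Series"
begin

unbundle fps_syntax

datatype 'k ser = Ser (cf: "bool list \<times> bool list \<Rightarrow> 'k")

lemma ser_eqI: "(\<And>p. cf f p = cf g p) \<Longrightarrow> f = g"
  by (cases f, cases g) auto

definition pap :: "bool list \<times> bool list \<Rightarrow> bool list \<times> bool list \<Rightarrow> bool list \<times> bool list" where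
  "pap a b = (fst a @ fst b, snd a @ snd b)"

definition splits :: "bool list \<times> bool list \<Rightarrow> ((bool list \<times> bool list) \<times> (bool list \<times> bool list)) set" where
  "splits p = {(a,b). pap a b = p}"

definition sz :: "bool list \<times> bool list \<Rightarrow> nat" where
  "sz p = length (fst p) + length (snd p)"

lemma pap_assoc: "pap (pap a b) c = pap a (pap b c)"
  by (simp add: pap_def)

lemma pap_Nil [simp]: "pap ([],[]) a = a" "pap a ([],[]) = a"
  by (auto simp: pap_def)

lemma sz_pap [simp]: "sz (pap a b) = sz a + sz b"
  by (simp add: sz_def pap_def)

lemma pap_eq_Nil: "pap a b = ([],[]) \<longleftrightarrow> a = ([],[]) \<and> b = ([],[])"
  by (cases a; cases b) (auto simp: pap_def)

lemma finite_splits [simp]: "finite (splits p)"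
proof -
  obtain u v where p: "p = (u,v)" by (cases p)
  have "splits p \<subseteq> (\<lambda>(i,j). ((take i u, take j v),(drop i u, drop j v))) ` ({..length u}\<times>{..length v})"
  proof
    fix x assume "x \<in> splits p"
    then obtain a1 a2 b1 b2 where x: "x = ((a1,a2),(b1,b2))" and e: "a1 @ b1 = u" "a2 @ b2 = v"
      by (cases x) (auto simp: splits_def pap_def p)
    show "x \<in> (\<lambda>(i,j). ((take i u, take j v),(drop i u, drop j v))) ` ({..length u}\<times>{..length v})"
      by (rule image_eqI[where x="(length a1, length a2)"]) (use e x in auto)
  qed
  then show ?thesis by (rule finite_subset) auto
qed

lemma splits_Nil: "splits ([],[]) = {(([],[]),([],[]))}"
  by (auto simp: splits_def pap_eq_Nil)

lemma sum_splits_assoc: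
  "(\<Sum>x\<in>splits p. \<Sum>y\<in>splits (fst x). G (fst y) (snd y) (snd x)) =
   (\<Sum>x\<in>splits p. \<Sum>y\<in>splits (snd x). G (fst x) (fst y) (snd y))"
proof -
  have "(\<Sum>x\<in>splits p. \<Sum>y\<in>splits (fst x). G (fst y) (snd y) (snd x)) =
        (\<Sum>z\<in>Sigma (splits p) (\<lambda>x. splits (fst x)). G (fst (snd z)) (snd (snd z)) (snd (fst z)))"
    by (subst sum.Sigma) (auto simp: split_def)
  also have "\<dots> = (\<Sum>z\<in>Sigma (splits p) (\<lambda>x. splits (snd x)). G (fst (fst z)) (fst (snd z)) (snd (snd z)))"
    apply (rule sum.reindex_bij_witness[where i="\<lambda>((a,y),(b,c)). ((pap a b, c),(a,b))"
                                          and j="\<lambda>((x,c),(a,b)). ((a, pap b c),(b,c))"])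
    apply (auto simp: splits_def)
    apply (metis pap_assoc)+
    done
  also have "\<dots> = (\<Sum>x\<in>splits p. \<Sum>y\<in>splits (snd x). G (fst x) (fst y) (snd y))"
    by (subst sum.Sigma) (auto simp: split_def)
  finally show ?thesis .
qed

lemma sum_splits_unit_left:
  fixes c :: "'a::comm_ring_1"
  shows "(\<Sum>x\<in>splits p. (if fst x = ([],[]) then c else 0) * G (snd x)) = c * G p"
proof -
  have "(\<Sum>x\<in>splits p. (if fst x = ([],[]) then c else 0) * G (snd x)) =
     (\<Sum>x\<in>splits p. (if x = (([],[]),p) then c * G p else 0))"
    by (rule sum.cong) (auto simp: splits_def)
  also have "\<dots> = c * G p" by (subst sum.delta) (simp, simp add: splits_def)
  finally show ?thesis .
qed

lemma sum_splits_unit_right: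
  fixes c :: "'a::comm_ring_1"
  shows "(\<Sum>x\<in>splits p. G (fst x) * (if snd x = ([],[]) then c else 0)) = G p * c"
proof -
  have "(\<Sum>x\<in>splits p. G (fst x) * (if snd x = ([],[]) then c else 0)) =
     (\<Sum>x\<in>splits p. (if x = (p,([],[])) then G p * c else 0))"
    by (rule sum.cong) (auto simp: splits_def)
  also have "\<dots> = G p * c" by (subst sum.delta) (simp, simp add: splits_def)
  finally show ?thesis .
qed

instantiation ser :: (comm_ring_1) ring_1
begin
definition "0 = Ser (\<lambda>_. 0)"
definition "1 = Ser (\<lambda>p. if p = ([],[]) then 1 else 0)"
definition "f + g = Ser (\<lambda>p. cf f p + cf g p)"
definition "f - g = Ser (\<lambda>p. cf f p - cf g p)"
definition "- f = Ser (\<lambda>p. - cf f p)"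
definition "f * g = Ser (\<lambda>p. \<Sum>x\<in>splits p. cf f (fst x) * cf g (snd x))"
instance
proof
  show "(0::'a ser) \<noteq> 1"
  proof
    assume "(0::'a ser) = 1"
    then have "cf (0::'a ser) ([],[]) = cf 1 ([],[])" by simp
    then show False by (simp add: zero_ser_def one_ser_def)
  qed
next
  fix a b c :: "'a ser"
  show "a * b * c = a * (b * c)"
    by (rule ser_eqI) (simp add: times_ser_def sum_distrib_left sum_distrib_right
          mult.assoc sum_splits_assoc[where G="\<lambda>x y z. cf a x * (cf b y * cf c z)"])
qed (auto intro!: ser_eqI simp: zero_ser_def one_ser_def plus_ser_def minus_ser_def uminus_ser_def
        times_ser_def sum_splits_unit_left sum_splits_unit_right sum.distrib
        distrib_left distrib_right)
end

lemma cf_zero [simp]: "cf 0 p = 0" by (simp add: zero_ser_def)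
lemma cf_one: "cf 1 p = (if p = ([],[]) then 1 else 0)" by (simp add: one_ser_def)
lemma cf_add [simp]: "cf (f + g) p = cf f p + cf g p" by (simp add: plus_ser_def)
lemma cf_diff [simp]: "cf (f - g) p = cf f p - cf g p" by (simp add: minus_ser_def)
lemma cf_uminus [simp]: "cf (- f) p = - cf f p" by (simp add: uminus_ser_def)
lemma cf_mult: "cf (f * g) p = (\<Sum>x\<in>splits p. cf f (fst x) * cf g (snd x))" by (simp add: times_ser_def)
lemma cf_sum: "cf (sum F A) p = (\<Sum>i\<in>A. cf (F i) p)"
  by (induction A rule: infinite_finite_induct) auto

definition sc :: "'k::comm_ring_1 \<Rightarrow> 'k ser" where
  "sc c = Ser (\<lambda>p. if p = ([],[]) then c else 0)"

lemma cf_sc: "cf (sc c) p = (if p = ([],[]) then c else 0)" by (simp add: sc_def)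

lemma cf_sc_mult [simp]: "cf (sc c * f) p = c * cf f p"
  by (simp add: cf_mult cf_sc sum_splits_unit_left[where G="cf f"])

lemma cf_mult_sc [simp]: "cf (f * sc c) p = cf f p * c"
  by (simp add: cf_mult cf_sc sum_splits_unit_right[where G="cf f"])

lemma sc_add: "sc (a + b) = sc a + sc b" by (rule ser_eqI) (simp add: cf_sc)
lemma sc_diff: "sc (a - b) = sc a - sc b" by (rule ser_eqI) (simp add: cf_sc)
lemma sc_0 [simp]: "sc 0 = 0" by (rule ser_eqI) (simp add: cf_sc)
lemma sc_1 [simp]: "sc 1 = 1" by (rule ser_eqI) (simp add: cf_sc cf_one)
lemma sc_mult: "sc (a * b) = sc a * sc b" by (rule ser_eqI) (simp add: cf_sc)
lemma sc_comm: "sc c * f = f * sc c" by (rule ser_eqI) (simp add: mult.commute)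
lemma sc_sum: "sc (sum f A) = (\<Sum>i\<in>A. sc (f i))"
  by (induction A rule: infinite_finite_induct) (auto simp: sc_add)

definition inF :: "nat \<Rightarrow> 'k::comm_ring_1 ser \<Rightarrow> bool" where
  "inF n f \<longleftrightarrow> (\<forall>p. sz p < n \<longrightarrow> cf f p = 0)"

lemma inF_0 [simp]: "inF 0 f" by (simp add: inF_def)
lemma inF_zero [simp]: "inF n 0" by (simp add: inF_def)
lemma inF_add: "inF n f \<Longrightarrow> inF n g \<Longrightarrow> inF n (f + g)" by (simp add: inF_def)
lemma inF_diff: "inF n f \<Longrightarrow> inF n g \<Longrightarrow> inF n (f - g)" by (simp add: inF_def)
lemma inF_uminus: "inF n f \<Longrightarrow> inF n (- f)" by (simp add: inF_def)
lemma inF_uminus_iff [simp]: "inF n (- f) \<longleftrightarrow> inF n f" by (simp add: inF_def)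
lemma inF_mono: "m \<le> n \<Longrightarrow> inF n f \<Longrightarrow> inF m f" by (simp add: inF_def)
lemma inF_sc_mult: "inF n f \<Longrightarrow> inF n (sc c * f)" by (simp add: inF_def)
lemma inF_mult_sc: "inF n f \<Longrightarrow> inF n (f * sc c)" by (simp add: inF_def)
lemma inF_sum: "(\<And>i. i \<in> A \<Longrightarrow> inF n (f i)) \<Longrightarrow> inF n (sum f A)"
  by (induction A rule: infinite_finite_induct) (auto intro: inF_add)

lemma inF_mult: "inF m f \<Longrightarrow> inF n g \<Longrightarrow> inF (m + n) (f * g)"
  unfolding inF_def cf_mult
proof (intro allI impI sum.neutral ballI)
  fix p x assume f: "\<forall>p. sz p < m \<longrightarrow> cf f p = 0" and g: "\<forall>p. sz p < n \<longrightarrow> cf g p = 0"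
    and p: "sz p < m + n" and x: "x \<in> splits p"
  then have "sz (fst x) + sz (snd x) = sz p" by (auto simp: splits_def)
  then have "sz (fst x) < m \<or> sz (snd x) < n" using p by linarith
  then show "cf f (fst x) * cf g (snd x) = 0" using f g by (metis mult_zero_left mult_zero_right)
qed

lemma inF_mult_left: "inF n f \<Longrightarrow> inF n (f * g)"
  using inF_mult[of n f 0 g] by simp
lemma inF_mult_right: "inF n g \<Longrightarrow> inF n (f * g)"
  using inF_mult[of 0 f n g] by simp

lemma inF_power: "inF 1 f \<Longrightarrow> inF n (f ^ n)"
proof (induction n)
  case (Suc n)
  then show ?case using inF_mult[of 1 f n "f ^ n"] by simp
qed (simp)

lemma inF_power_ge: "inF 1 f \<Longrightarrow> n \<le> k \<Longrightarrow> inF n (f ^ k)"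
  using inF_mono inF_power by blast

lemma inF_all_eq: "(\<And>n. inF n f) \<Longrightarrow> f = 0"
proof (rule ser_eqI)
  fix p assume "\<And>n. inF n f"
  then have "inF (Suc (sz p)) f" .
  then show "cf f p = cf 0 p" unfolding inF_def by (metis cf_zero lessI)
qed

definition modF :: "nat \<Rightarrow> 'k::comm_ring_1 ser \<Rightarrow> 'k ser \<Rightarrow> bool" where
  "modF n f g \<longleftrightarrow> inF n (f - g)"

lemma modF_refl [simp]: "modF n f f" by (simp add: modF_def)
lemma modF_sym: "modF n f g \<Longrightarrow> modF n g f"
  unfolding modF_def using inF_uminus[of n "f - g"] by simp
lemma modF_trans: "modF n f g \<Longrightarrow> modF n g h \<Longrightarrow> modF n f h"
  unfolding modF_def using inF_add[of n "f - g" "g - h"] by simp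
lemma modF_add: "modF n f f' \<Longrightarrow> modF n g g' \<Longrightarrow> modF n (f + g) (f' + g')"
  unfolding modF_def using inF_add[of n "f - f'" "g - g'"] by (simp add: algebra_simps)
lemma modF_diff: "modF n f f' \<Longrightarrow> modF n g g' \<Longrightarrow> modF n (f - g) (f' - g')"
  unfolding modF_def using inF_diff[of n "f - f'" "g - g'"] by (simp add: algebra_simps)
lemma modF_mult: "modF n f f' \<Longrightarrow> modF n g g' \<Longrightarrow> modF n (f * g) (f' * g')"
proof -
  assume a: "modF n f f'" "modF n g g'"
  have "f * g - f' * g' = (f - f') * g + f' * (g - g')" by (simp add: algebra_simps)
  then show ?thesis using a unfolding modF_def
    by (simp add: inF_add inF_mult_left inF_mult_right)
qed
lemma modF_power: "modF n f f' \<Longrightarrow> modF n (f ^ k) (f' ^ k)"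
  by (induction k) (auto intro: modF_mult)
lemma modF_sum: "(\<And>i. i \<in> A \<Longrightarrow> modF n (f i) (g i)) \<Longrightarrow> modF n (sum f A) (sum g A)"
  unfolding modF_def by (simp add: inF_sum flip: sum_subtractf)
lemma modF_inF: "inF n f \<Longrightarrow> modF n (g + f) g" by (simp add: modF_def)
lemma modF_inF': "inF n f \<Longrightarrow> modF n g (g + f)" by (simp add: modF_def)
lemma modF_mono: "m \<le> n \<Longrightarrow> modF n f g \<Longrightarrow> modF m f g" by (auto simp: modF_def intro: inF_mono)
lemma modF_all_eq: "(\<And>K. modF (Suc K) f g) \<Longrightarrow> f = g"
proof -
  assume "\<And>K. modF (Suc K) f g"
  then have "\<And>n. inF n (f - g)" unfolding modF_def
    by (metis Suc_n_not_le_n inF_mono nat_le_linear)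
  then show "f = g" using inF_all_eq[of "f - g"] by simp
qed
lemma modF_sc_mult: "modF n f g \<Longrightarrow> modF n (sc c * f) (sc c * g)"
  by (rule modF_mult) auto

lemma sum_square_split:
  fixes G :: "nat \<Rightarrow> nat \<Rightarrow> 'a::comm_monoid_add"
  shows "(\<Sum>i\<le>K. \<Sum>j\<le>K. G i j) =
     (\<Sum>n\<le>K. \<Sum>i\<le>n. G i (n - i)) + (\<Sum>(i,j)\<in>{(i,j). i \<le> K \<and> j \<le> K \<and> K < i + j}. G i j)"
proof -
  have fin: "finite ({..K} \<times> {..K})" by simp
  have "(\<Sum>i\<le>K. \<Sum>j\<le>K. G i j) = (\<Sum>(i,j)\<in>{..K} \<times> {..K}. G i j)"
    by (simp add: sum.cartesian_product)
  also have "{..K} \<times> {..K} = {(i,j). i + j \<le> K} \<union> {(i,j). i \<le> K \<and> j \<le> K \<and> K < i + j}"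
    by auto
  also have "(\<Sum>(i,j)\<in>\<dots>. G i j) = (\<Sum>(i,j)\<in>{(i,j). i + j \<le> K}. G i j) +
      (\<Sum>(i,j)\<in>{(i,j). i \<le> K \<and> j \<le> K \<and> K < i + j}. G i j)"
  proof (rule sum.union_disjoint)
    show "finite {(i, j). i + j \<le> K}"
      by (rule finite_subset[OF _ fin]) auto
    show "finite {(i, j). i \<le> K \<and> j \<le> K \<and> K < i + j}"
      by (rule finite_subset[OF _ fin]) auto
  qed auto
  also have "(\<Sum>(i,j)\<in>{(i,j). i + j \<le> K}. G i j) = (\<Sum>n\<le>K. \<Sum>i\<le>n. G i (n - i))"
    by (rule sum.triangle_reindex_eq)
  finally show ?thesis .
qed

lemma modF_cauchy:
  fixes A B :: "nat \<Rightarrow> 'k::comm_ring_1 ser"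
  assumes "\<And>i j. inF (i + j) (A i * B j)"
  shows "modF (Suc K) ((\<Sum>i\<le>K. A i) * (\<Sum>j\<le>K. B j)) (\<Sum>n\<le>K. \<Sum>i\<le>n. A i * B (n - i))"
proof -
  have "(\<Sum>i\<le>K. A i) * (\<Sum>j\<le>K. B j) = (\<Sum>i\<le>K. \<Sum>j\<le>K. A i * B j)"
    by (rule sum_product)
  also have "\<dots> = (\<Sum>n\<le>K. \<Sum>i\<le>n. A i * B (n - i)) +
      (\<Sum>(i,j)\<in>{(i,j). i \<le> K \<and> j \<le> K \<and> K < i + j}. A i * B j)"
    by (rule sum_square_split)
  finally have e: "(\<Sum>i\<le>K. A i) * (\<Sum>j\<le>K. B j) = \<dots>" .
  have "inF (Suc K) (\<Sum>(i,j)\<in>{(i,j). i \<le> K \<and> j \<le> K \<and> K < i + j}. A i * B j)"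
    by (rule inF_sum) (auto intro: inF_mono[OF _ assms])
  then show ?thesis unfolding e by (rule modF_inF)
qed

lemma binomial_commute:
  fixes a b :: "'a::ring_1"
  assumes ab: "a * b = b * a"
  shows "(a + b)^n = (\<Sum>k\<le>n. (of_nat (n choose k)) * a^k * b^(n-k))"
proof (induct n)
  case 0
  then show ?case by simp
next
  case (Suc n)
  have bk: "b * a^k = a^k * b" for k
  proof (induction k)
    case (Suc k)
    have "b * a ^ Suc k = (b * a) * a^k" by (simp add: mult.assoc del: power_Suc) (simp add: mult.assoc)
    also have "\<dots> = a * (b * a^k)" using ab by (metis mult.assoc)
    also have "\<dots> = a ^ Suc k * b" using Suc by (simp add: mult.assoc)
    finally show ?case .
  qed simp
  have bterm: "b * (of_nat c * a^k * b^m) = of_nat c * a^k * b^(m+1)" for c k m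
  proof -
    have "b * (of_nat c * a^k * b^m) = of_nat c * (b * a^k) * b^m"
      by (simp add: mult.assoc mult_of_nat_commute)
    also have "\<dots> = of_nat c * a^k * b^(m+1)" by (simp add: bk mult.assoc)
    finally show ?thesis .
  qed
  have aterm: "a * (of_nat c * a^k * b^m) = of_nat c * a^(k+1) * b^m" for c k m
    by (simp add: mult.assoc mult_of_nat_commute)
  have decomp: "{0..n+1} = {0} \<union> {n + 1} \<union> {1..n}" and decomp2: "{0..n} = {0} \<union> {1..n}"
    by auto
  have "(a + b)^(n+1) = (a + b) * (\<Sum>k\<le>n. of_nat (n choose k) * a^k * b^(n - k))"
    using Suc.hyps by simp
  also have "\<dots> = a * (\<Sum>k\<le>n. of_nat (n choose k) * a^k * b^(n-k)) +
      b * (\<Sum>k\<le>n. of_nat (n choose k) * a^k * b^(n-k))"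
    by (rule distrib_right)
  also have "\<dots> = (\<Sum>k\<le>n. of_nat (n choose k) * a^(k+1) * b^(n-k)) +
      (\<Sum>k\<le>n. of_nat (n choose k) * a^k * b^(n - k + 1))"
    by (simp add: sum_distrib_left aterm bterm)
  also have "\<dots> = (\<Sum>k\<le>n. of_nat (n choose k) * a^k * b^(n + 1 - k)) +
      (\<Sum>k=1..n+1. of_nat (n choose (k - 1)) * a^k * b^(n + 1 - k))"
    by (simp add: atMost_atLeast0 sum.shift_bounds_cl_Suc_ivl Suc_diff_le add.commute del: sum.cl_ivl_Suc)
  also have "\<dots> = b^(n + 1) +
      (\<Sum>k=1..n. of_nat (n choose k) * a^k * b^(n + 1 - k)) + (a^(n + 1) +
      (\<Sum>k=1..n. of_nat (n choose (k - 1)) * a^k * b^(n + 1 - k)))"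
      using sum.nat_ivl_Suc' [of 1 n "\<lambda>k. of_nat (n choose (k-1)) * a ^ k * b ^ (n + 1 - k)"]
    by (simp add: sum.atLeast_Suc_atMost atMost_atLeast0)
  also have "\<dots> = a^(n + 1) + b^(n + 1) +
      (\<Sum>k=1..n. of_nat (n + 1 choose k) * a^k * b^(n + 1 - k))"
    by (auto simp add: algebra_simps sum.distrib [symmetric] choose_reduce_nat)
  also have "\<dots> = (\<Sum>k\<le>n+1. of_nat (n + 1 choose k) * a^k * b^(n + 1 - k))"
    using decomp by (simp add: atMost_atLeast0 algebra_simps)
  finally show ?case
    by simp
qed

section \<open>Evaluation of formal power series\<close>

lemma sc_mult_mult: "sc a * f * (sc b * g) = sc (a * b) * (f * g)"
proof -
  have "sc a * f * (sc b * g) = sc a * ((f * sc b) * g)" by (simp add: mult.assoc)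
  also have "\<dots> = sc a * ((sc b * f) * g)" by (simp only: sc_comm)
  also have "\<dots> = sc (a*b) * (f * g)" by (simp add: sc_mult mult.assoc)
  finally show ?thesis .
qed

lemma inF_cf: "inF n f \<Longrightarrow> sz p < n \<Longrightarrow> cf f p = 0"
  unfolding inF_def by blast

definition sig :: "'k::field_char_0 ser \<Rightarrow> 'k fps \<Rightarrow> 'k ser" where
  "sig h a = Ser (\<lambda>p. \<Sum>i\<le>sz p. a$i * cf (h^i) p)"

definition ptr :: "'k::field_char_0 fps \<Rightarrow> 'k ser \<Rightarrow> nat \<Rightarrow> 'k ser" where
  "ptr a h K = (\<Sum>i\<le>K. sc (a$i) * h^i)"

lemma cf_sig: "cf (sig h a) p = (\<Sum>i\<le>sz p. a$i * cf (h^i) p)"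
  by (simp add: sig_def)

lemma sum_atMost_extend:
  fixes m K :: nat
  assumes "m \<le> K" "\<And>i. m < i \<Longrightarrow> i \<le> K \<Longrightarrow> g i = 0"
  shows "(\<Sum>i\<le>K. g i) = (\<Sum>i\<le>m. g i)"
  by (rule sum.mono_neutral_right) (use assms in auto)

lemma sig_trunc:
  assumes h: "inF 1 h"
  shows "modF (Suc K) (sig h a) (ptr a h K)"
  unfolding modF_def inF_def
proof (intro allI impI)
  fix p :: "bool list \<times> bool list" assume "sz p < Suc K"
  then have pK: "sz p \<le> K" by simp
  have "cf (ptr a h K) p = (\<Sum>i\<le>K. a$i * cf (h^i) p)"
    by (simp add: ptr_def cf_sum)
  also have "\<dots> = (\<Sum>i\<le>sz p. a$i * cf (h^i) p)"
  proof (rule sum_atMost_extend[OF pK])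
    fix i assume "sz p < i"
    then show "a $ i * cf (h ^ i) p = 0"
      using inF_power[OF h, of i] unfolding inF_def by (metis mult_zero_right)
  qed
  finally show "cf (sig h a - ptr a h K) p = 0" by (simp add: cf_sig)
qed

lemma sig_add: "sig h (a + b) = sig h a + sig h b"
  by (rule ser_eqI) (simp add: cf_sig distrib_right sum.distrib)

lemma sig_diff: "sig h (a - b) = sig h a - sig h b"
  by (rule ser_eqI) (simp add: cf_sig left_diff_distrib sum_subtractf)

lemma sig_0 [simp]: "sig h 0 = 0"
  by (rule ser_eqI) (simp add: cf_sig)

lemma sig_const_mult: "sig h (fps_const c * a) = sc c * sig h a"
  by (rule ser_eqI) (simp add: cf_sig sum_distrib_left mult.assoc)

lemma sig_sum: "sig h (sum f A) = (\<Sum>i\<in>A. sig h (f i))"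
  by (induction A rule: infinite_finite_induct) (auto simp: sig_add)

lemma sig_trunc_eq:
  assumes "\<And>i. i \<le> K \<Longrightarrow> a$i = b$i"
  shows "modF (Suc K) (sig h a) (sig h b)"
  unfolding modF_def inF_def
  by (auto simp: cf_sig assms intro!: sum.cong)

lemma inF_sig: "inF 1 h \<Longrightarrow> a$0 = 0 \<Longrightarrow> inF 1 (sig h a)"
  by (auto simp: inF_def cf_sig sz_def cf_one)

lemma sig_mult:
  assumes h: "inF 1 h"
  shows "sig h (a * b) = sig h a * sig h b"
proof (rule modF_all_eq)
  fix K
  define A where "A i = sc (a$i) * h^i" for i
  define B where "B i = sc (b$i) * h^i" for i
  have AB: "A i * B j = sc (a$i * b$j) * h^(i+j)" for i j
    by (simp add: A_def B_def sc_mult_mult power_add)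
  have inAB: "inF (i + j) (A i * B j)" for i j
    unfolding AB by (rule inF_sc_mult) (rule inF_power[OF h])
  have "modF (Suc K) (sig h a * sig h b) (ptr a h K * ptr b h K)"
    by (rule modF_mult; rule sig_trunc[OF h])
  moreover have "ptr a h K * ptr b h K = (\<Sum>i\<le>K. A i) * (\<Sum>j\<le>K. B j)"
    by (simp add: ptr_def A_def B_def)
  moreover have "modF (Suc K) ((\<Sum>i\<le>K. A i) * (\<Sum>j\<le>K. B j))
                   (\<Sum>n\<le>K. \<Sum>i\<le>n. A i * B (n - i))"
    by (rule modF_cauchy) (rule inAB)
  moreover have "(\<Sum>n\<le>K. \<Sum>i\<le>n. A i * B (n - i)) = ptr (a * b) h K"
    unfolding ptr_def AB
  proof (rule sum.cong[OF refl])
    fix n assume "n \<in> {..K}"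
    have "(\<Sum>i\<le>n. sc (a $ i * b $ (n - i)) * h ^ (i + (n - i))) =
          (\<Sum>i\<le>n. sc (a $ i * b $ (n - i)) * h ^ n)"
      by (rule sum.cong) auto
    also have "\<dots> = sc ((a * b) $ n) * h ^ n"
      by (simp add: fps_mult_nth sc_sum sum_distrib_right atMost_atLeast0)
    finally show "(\<Sum>i\<le>n. sc (a $ i * b $ (n - i)) * h ^ (i + (n - i))) = sc ((a * b) $ n) * h ^ n" .
  qed
  moreover have "modF (Suc K) (sig h (a * b)) (ptr (a * b) h K)"
    by (rule sig_trunc[OF h])
  ultimately show "modF (Suc K) (sig h (a * b)) (sig h a * sig h b)"
    by (metis modF_sym modF_trans)
qed

lemma sig_X: "inF 1 h \<Longrightarrow> sig h fps_X = h"
proof (rule ser_eqI)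
  fix p assume h: "inF 1 h"
  show "cf (sig h fps_X) p = cf h p"
  proof (cases "sz p = 0")
    case True
    then show ?thesis using h inF_cf[OF h, of p] by (simp add: cf_sig)
  next
    case False
    then have "(\<Sum>i\<le>sz p. fps_X $ i * cf (h ^ i) p) = (\<Sum>i\<in>{1}. fps_X $ i * cf (h ^ i) p)"
      by (intro sum.mono_neutral_right) (auto simp: fps_X_def)
    then show ?thesis by (simp add: cf_sig fps_X_def)
  qed
qed

lemma sig_const: "sig h (fps_const c) = sc c"
proof (rule ser_eqI)
  fix p
  have "(\<Sum>i\<le>sz p. fps_const c $ i * cf (h ^ i) p) = (\<Sum>i\<in>{0}. fps_const c $ i * cf (h ^ i) p)"
    by (intro sum.mono_neutral_right) auto
  then show "cf (sig h (fps_const c)) p = cf (sc c) p"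
    by (simp add: cf_sig cf_sc cf_one)
qed

lemma sig_1 [simp]: "sig h 1 = 1"
  by (metis fps_const_1_eq_1 sig_const sc_1)

lemma sig_power: "inF 1 h \<Longrightarrow> sig h (a ^ n) = sig h a ^ n"
  by (induction n) (simp_all add: sig_mult)


lemma sig_compose:
  assumes h: "inF 1 h" and b0: "b$0 = 0"
  shows "sig h (a oo b) = sig (sig h b) a"
proof (rule modF_all_eq)
  fix K
  have hb: "inF 1 (sig h b)" by (rule inF_sig[OF h b0])
  define c where "c = (\<Sum>i\<le>K. fps_const (a$i) * b^i)"
  have "modF (Suc K) (sig (sig h b) a) (ptr a (sig h b) K)" by (rule sig_trunc[OF hb])
  moreover have "ptr a (sig h b) K = sig h c"
    by (simp add: ptr_def c_def sig_sum sig_const_mult sig_power[OF h])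
  moreover have "modF (Suc K) (sig h c) (sig h (a oo b))"
  proof (rule sig_trunc_eq)
    fix n assume n: "n \<le> K"
    have "c $ n = (\<Sum>i\<le>K. a$i * (b^i) $ n)" by (simp add: c_def fps_sum_nth)
    also have "\<dots> = (\<Sum>i\<le>n. a$i * (b^i) $ n)"
      by (rule sum_atMost_extend[OF n]) (use startsby_zero_power_prefix[OF b0] in auto)
    also have "\<dots> = (a oo b) $ n" by (simp add: fps_compose_nth atMost_atLeast0)
    finally show "c $ n = (a oo b) $ n" .
  qed
  ultimately show "modF (Suc K) (sig h (a oo b)) (sig (sig h b) a)"
    by (metis modF_sym modF_trans)
qed

section \<open>Exponential and logarithm\<close>

lemma of_nat_ser_sc: "(of_nat n :: 'k::comm_ring_1 ser) = sc (of_nat n)"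
  by (induction n) (simp_all add: sc_add)

definition texp :: "'k::field_char_0 ser \<Rightarrow> 'k ser" where
  "texp f = sig f (fps_exp 1)"

definition tlog :: "'k::field_char_0 ser \<Rightarrow> 'k ser" where
  "tlog h = sig h (fps_ln 1)"

lemma fps_exp_ln: "(fps_exp (1::'k::field_char_0)) oo fps_ln 1 = fps_X + 1"
proof -
  let ?E = "fps_exp (1::'k)"
  have "(?E - 1) oo fps_ln 1 = fps_X"
    unfolding fps_ln_fps_exp_inv[of "1::'k", simplified]
    by (rule fps_inv_right) simp_all
  then have "(fps_exp (1::'k) oo fps_ln 1) - 1 = fps_X" by (simp add: fps_compose_sub_distrib)
  then show ?thesis by (metis add.commute diff_add_cancel)
qed

lemma texp_tlog: "inF 1 h \<Longrightarrow> texp (tlog h) = 1 + h"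
  unfolding texp_def tlog_def
  by (simp add: sig_compose[symmetric] fps_exp_ln sig_add sig_X)

lemma inF_tlog: "inF 1 h \<Longrightarrow> inF 1 (tlog h)"
  unfolding tlog_def by (rule inF_sig) simp_all

lemma texp_trunc: "inF 1 f \<Longrightarrow> modF (Suc K) (texp f) (\<Sum>i\<le>K. sc (1 / fact i) * f^i)"
  using sig_trunc[of f K "fps_exp 1"] by (simp add: texp_def ptr_def)

lemma texp_add:
  assumes a: "inF 1 a" and b: "inF 1 b" and ab: "a * b = b * a"
  shows "texp (a + b) = texp a * texp b"
proof (rule modF_all_eq)
  fix K
  define A where "A i = sc (1 / fact i) * a^i" for i
  define B where "B i = sc (1 / fact i) * b^i" for i
  have AB: "A i * B j = sc (1 / fact i * (1 / fact j)) * (a^i * b^j)" for i j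
    by (simp only: A_def B_def sc_mult_mult)
  have inAB: "inF (i + j) (A i * B j)" for i j
    unfolding AB by (rule inF_sc_mult) (rule inF_mult; rule inF_power; fact)
  have ab1: "inF 1 (a + b)" using a b by (rule inF_add)
  have "modF (Suc K) (texp a * texp b) ((\<Sum>i\<le>K. A i) * (\<Sum>j\<le>K. B j))"
    unfolding A_def B_def by (rule modF_mult; rule texp_trunc; fact)
  moreover have "modF (Suc K) ((\<Sum>i\<le>K. A i) * (\<Sum>j\<le>K. B j))
                   (\<Sum>n\<le>K. \<Sum>i\<le>n. A i * B (n - i))"
    by (rule modF_cauchy) (rule inAB)
  moreover have "(\<Sum>n\<le>K. \<Sum>i\<le>n. A i * B (n - i)) = (\<Sum>n\<le>K. sc (1 / fact n) * (a + b)^n)"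
  proof (rule sum.cong[OF refl])
    fix n assume "n \<in> {..K}"
    have "sc (1 / fact n) * (a + b)^n = (\<Sum>i\<le>n. sc (1 / fact n) * (of_nat (n choose i) * a^i * b^(n-i)))"
      by (simp add: binomial_commute[OF ab] sum_distrib_left)
    also have "\<dots> = (\<Sum>i\<le>n. A i * B (n - i))"
    proof (rule sum.cong[OF refl])
      fix i assume i: "i \<in> {..n}"
      have "sc (1 / fact n) * (of_nat (n choose i) * a^i * b^(n-i)) =
                 (sc (1 / fact n) * sc (of_nat (n choose i))) * (a^i * b^(n-i))"
        by (simp add: of_nat_ser_sc mult.assoc)
      also have "\<dots> = sc (1 / fact n * of_nat (n choose i)) * (a^i * b^(n-i))"
        by (simp only: sc_mult)
      also have "1 / fact n * of_nat (n choose i) = (1 / fact i * (1 / fact (n - i)) :: 'a)"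
        using i by (simp add: binomial_fact field_simps)
      finally show "sc (1 / fact n) * (of_nat (n choose i) * a^i * b^(n-i)) = A i * B (n - i)"
        by (simp add: AB)
    qed
    finally show "(\<Sum>i\<le>n. A i * B (n - i)) = sc (1 / fact n) * (a + b)^n" by simp
  qed
  moreover have "modF (Suc K) (texp (a + b)) (\<Sum>n\<le>K. sc (1 / fact n) * (a + b)^n)"
    by (rule texp_trunc[OF ab1])
  ultimately show "modF (Suc K) (texp (a + b)) (texp a * texp b)"
    by (metis modF_sym modF_trans)
qed

lemma finite_words_le [simp]: "finite {w::bool list. length w \<le> n}"
  using finite_lists_length_le[of "UNIV::bool set" n] by simp

lemma finite_words_eq [simp]: "finite {w::bool list. length w = n}"
  by (rule finite_subset[OF _ finite_words_le[of n]]) auto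

definition WP :: "nat \<Rightarrow> (bool list \<times> bool list) set" where
  "WP n = {(w1,w2). length w1 + length w2 = n}"

lemma finite_WP [simp]: "finite (WP n)"
  by (rule finite_subset[of _ "{w. length w \<le> n} \<times> {w. length w \<le> n}"]) (auto simp: WP_def)

definition isA :: "'k::comm_ring_1 ser \<Rightarrow> bool" where
  "isA f \<longleftrightarrow> (\<forall>u v. v \<noteq> [] \<longrightarrow> cf f (u,v) = 0)"

definition isB :: "'k::comm_ring_1 ser \<Rightarrow> bool" where
  "isB f \<longleftrightarrow> (\<forall>u v. u \<noteq> [] \<longrightarrow> cf f (u,v) = 0)"

definition sw :: "'k::comm_ring_1 ser \<Rightarrow> 'k ser" where
  "sw f = Ser (\<lambda>p. cf f (snd p, fst p))"

lemma cf_sw: "cf (sw f) (u,v) = cf f (v,u)" by (simp add: sw_def)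
lemma cf_sw': "cf (sw f) p = cf f (snd p, fst p)" by (simp add: sw_def)

lemma splits_NilR: "splits (w,[]) = (\<lambda>i. ((take i w, []), (drop i w, []))) ` {..length w}"
proof (rule set_eqI, rule iffI)
  fix x assume "x \<in> splits (w,[])"
  then obtain a b where x: "x = ((a,[]),(b,[]))" and "a @ b = w"
    by (cases x) (auto simp: splits_def pap_def)
  then show "x \<in> (\<lambda>i. ((take i w, []), (drop i w, []))) ` {..length w}"
    by (intro image_eqI[where x="length a"]) auto
qed (auto simp: splits_def pap_def)

lemma cf_mult_NilR: "cf (f * g) (w,[]) = (\<Sum>i\<le>length w. cf f (take i w, []) * cf g (drop i w, []))"
proof -
  have inj: "inj_on (\<lambda>i. ((take i w, []::bool list), (drop i w, []::bool list))) {..length w}"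
    by (rule inj_onI) (metis atMost_iff length_take min.absorb2 prod.inject)
  show ?thesis unfolding cf_mult splits_NilR by (simp add: sum.reindex[OF inj])
qed

lemma isA_0 [simp]: "isA 0" by (simp add: isA_def)
lemma isA_1 [simp]: "isA 1" by (simp add: isA_def cf_one)
lemma isA_sc [simp]: "isA (sc c)" by (simp add: isA_def cf_sc)
lemma isA_add: "isA f \<Longrightarrow> isA g \<Longrightarrow> isA (f + g)" by (simp add: isA_def)
lemma isA_diff: "isA f \<Longrightarrow> isA g \<Longrightarrow> isA (f - g)" by (simp add: isA_def)
lemma isA_mult: "isA f \<Longrightarrow> isA g \<Longrightarrow> isA (f * g)"
  unfolding isA_def cf_mult
proof (intro allI impI sum.neutral ballI)
  fix u v x assume f: "\<forall>u v. v \<noteq> [] \<longrightarrow> cf f (u, v) = 0" and g: "\<forall>u v. v \<noteq> [] \<longrightarrow> cf g (u, v) = 0"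
    and v: "v \<noteq> []" and x: "x \<in> splits (u, v)"
  then have "snd (fst x) \<noteq> [] \<or> snd (snd x) \<noteq> []" by (auto simp: splits_def pap_def)
  then show "cf f (fst x) * cf g (snd x) = 0" using f g
    by (metis mult_zero_left mult_zero_right prod.collapse)
qed
lemma isA_power: "isA f \<Longrightarrow> isA (f ^ n)" by (induction n) (auto intro: isA_mult)
lemma isA_sum: "(\<And>i. i \<in> A \<Longrightarrow> isA (f i)) \<Longrightarrow> isA (sum f A)"
  by (induction A rule: infinite_finite_induct) (auto intro: isA_add)
lemma isA_sig: "isA h \<Longrightarrow> isA (sig h a)"
  using isA_power[of h] by (simp add: isA_def cf_sig)
lemma isA_texp: "isA h \<Longrightarrow> isA (texp h)" by (simp add: texp_def isA_sig)
lemma isA_tlog: "isA h \<Longrightarrow> isA (tlog h)" by (simp add: tlog_def isA_sig)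

lemma cf_mult_AB:
  assumes f: "isA f" and g: "isB g"
  shows "cf (f * g) (u,v) = cf f (u,[]) * cf g ([],v)" "cf (g * f) (u,v) = cf f (u,[]) * cf g ([],v)"
proof -
  have "cf (f * g) (u,v) = (\<Sum>x\<in>splits (u,v). if x = ((u,[]),([],v)) then cf f (u,[]) * cf g ([],v) else 0)"
    unfolding cf_mult
  proof (rule sum.cong[OF refl])
    fix x assume x: "x \<in> splits (u,v)"
    obtain a1 a2 b1 b2 where xx: "x = ((a1,a2),(b1,b2))" by (metis prod.collapse)
    show "cf f (fst x) * cf g (snd x) = (if x = ((u,[]),([],v)) then cf f (u,[]) * cf g ([],v) else 0)"
    proof (cases "a2 = [] \<and> b1 = []")
      case True then show ?thesis using x xx by (auto simp: splits_def pap_def)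
    next
      case False then show ?thesis using f g xx unfolding isA_def isB_def by auto
    qed
  qed
  also have "\<dots> = cf f (u,[]) * cf g ([],v)"
    by (subst sum.delta) (simp, simp add: splits_def pap_def)
  finally show "cf (f * g) (u,v) = cf f (u,[]) * cf g ([],v)" .
  have "cf (g * f) (u,v) = (\<Sum>x\<in>splits (u,v). if x = (([],v),(u,[])) then cf f (u,[]) * cf g ([],v) else 0)"
    unfolding cf_mult
  proof (rule sum.cong[OF refl])
    fix x assume x: "x \<in> splits (u,v)"
    obtain a1 a2 b1 b2 where xx: "x = ((a1,a2),(b1,b2))" by (metis prod.collapse)
    show "cf g (fst x) * cf f (snd x) = (if x = (([],v),(u,[])) then cf f (u,[]) * cf g ([],v) else 0)"
    proof (cases "a1 = [] \<and> b2 = []")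
      case True then show ?thesis using x xx by (auto simp: splits_def pap_def mult.commute)
    next
      case False then show ?thesis using f g xx unfolding isA_def isB_def by auto
    qed
  qed
  also have "\<dots> = cf f (u,[]) * cf g ([],v)"
    by (subst sum.delta) (simp, simp add: splits_def pap_def)
  finally show "cf (g * f) (u,v) = cf f (u,[]) * cf g ([],v)" .
qed

lemma AB_commute: "isA f \<Longrightarrow> isB g \<Longrightarrow> f * g = g * f"
  by (rule ser_eqI) (metis cf_mult_AB prod.collapse)

lemma sw_sw [simp]: "sw (sw f) = f" by (rule ser_eqI) (simp add: sw_def)
lemma sw_add: "sw (f + g) = sw f + sw g" by (rule ser_eqI) (simp add: sw_def)
lemma sw_diff: "sw (f - g) = sw f - sw g" by (rule ser_eqI) (simp add: sw_def)
lemma sw_1 [simp]: "sw 1 = 1" by (rule ser_eqI) (auto simp: sw_def cf_one)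
lemma sw_0 [simp]: "sw 0 = 0" by (rule ser_eqI) (auto simp: sw_def)
lemma sw_sc [simp]: "sw (sc c) = sc c" by (rule ser_eqI) (auto simp: sw_def cf_sc)
lemma sw_mult: "sw (f * g) = sw f * sw g"
proof (rule ser_eqI)
  fix p :: "bool list \<times> bool list"
  let ?s = "\<lambda>q::bool list \<times> bool list. (snd q, fst q)"
  have "cf (sw (f * g)) p = (\<Sum>x\<in>splits (?s p). cf f (fst x) * cf g (snd x))"
    by (simp add: sw_def cf_mult)
  also have "\<dots> = (\<Sum>x\<in>splits p. cf f (?s (fst x)) * cf g (?s (snd x)))"
    by (rule sum.reindex_bij_witness[where i="\<lambda>x. (?s (fst x), ?s (snd x))" and j="\<lambda>x. (?s (fst x), ?s (snd x))"])
       (auto simp: splits_def pap_def)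
  also have "\<dots> = cf (sw f * sw g) p" by (simp add: sw_def cf_mult)
  finally show "cf (sw (f * g)) p = cf (sw f * sw g) p" .
qed
lemma sw_power: "sw (f ^ n) = sw f ^ n" by (induction n) (simp_all add: sw_mult)
lemma sw_sum: "sw (sum f A) = (\<Sum>i\<in>A. sw (f i))"
  by (induction A rule: infinite_finite_induct) (auto simp: sw_add)
lemma sz_swap: "sz (snd p, fst p) = sz p" by (simp add: sz_def)
lemma inF_sw: "inF n f \<Longrightarrow> inF n (sw f)"
  unfolding inF_def sw_def by (simp add: sz_swap)
lemma sw_sig: "sw (sig h a) = sig (sw h) a"
  by (rule ser_eqI) (simp add: cf_sw' cf_sig sz_swap flip: sw_power)
lemma sw_texp: "sw (texp h) = texp (sw h)" by (simp add: texp_def sw_sig)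
lemma isB_sw: "isA f \<Longrightarrow> isB (sw f)" by (simp add: isA_def isB_def sw_def)

section \<open>Monomials and the coproduct\<close>

definition mon :: "bool list \<times> bool list \<Rightarrow> 'k::comm_ring_1 ser" where
  "mon p = Ser (\<lambda>q. if q = p then 1 else 0)"

lemma cf_mon: "cf (mon p) q = (if q = p then 1 else 0)" by (simp add: mon_def)

definition X1 :: "bool \<Rightarrow> 'k::comm_ring_1 ser" where "X1 a = mon ([a],[])"
definition X2 :: "bool \<Rightarrow> 'k::comm_ring_1 ser" where "X2 a = mon ([],[a])"

definition hom :: "nat \<Rightarrow> 'k::comm_ring_1 ser \<Rightarrow> bool" where
  "hom n f \<longleftrightarrow> (\<forall>p. sz p \<noteq> n \<longrightarrow> cf f p = 0)"

lemma hom_cf: "hom n f \<Longrightarrow> sz p \<noteq> n \<Longrightarrow> cf f p = 0" unfolding hom_def by blast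
lemma hom_add: "hom n f \<Longrightarrow> hom n g \<Longrightarrow> hom n (f + g)" by (simp add: hom_def)
lemma hom_diff: "hom n f \<Longrightarrow> hom n g \<Longrightarrow> hom n (f - g)" by (simp add: hom_def)
lemma hom_one: "hom 0 1" by (simp add: hom_def cf_one sz_def)
lemma hom_mult: "hom m f \<Longrightarrow> hom n g \<Longrightarrow> hom (m + n) (f * g)"
  unfolding hom_def cf_mult
proof (intro allI impI sum.neutral ballI)
  fix p x assume f: "\<forall>p. sz p \<noteq> m \<longrightarrow> cf f p = 0" and g: "\<forall>p. sz p \<noteq> n \<longrightarrow> cf g p = 0"
    and p: "sz p \<noteq> m + n" and x: "x \<in> splits p"
  then have "sz (fst x) + sz (snd x) = sz p" by (auto simp: splits_def)
  then have "sz (fst x) \<noteq> m \<or> sz (snd x) \<noteq> n" using p by linarith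
  then show "cf f (fst x) * cf g (snd x) = 0" using f g by (metis mult_zero_left mult_zero_right)
qed
lemma hom_X12: "hom 1 (X1 a + X2 a)" by (auto simp: hom_def X1_def X2_def cf_mon sz_def)
lemma hom_sc_mult: "hom n f \<Longrightarrow> hom n (sc c * f)" by (simp add: hom_def)
lemma hom_inF: "hom n f \<Longrightarrow> inF n f" by (simp add: hom_def inF_def)

fun E :: "bool list \<Rightarrow> 'k::comm_ring_1 ser" where
  "E [] = 1"
| "E (a # w) = (X1 a + X2 a) * E w"

lemma E_append: "E (w1 @ w2) = E w1 * E w2"
  by (induction w1) (simp_all add: mult.assoc)

lemma hom_E: "hom (length w) (E w)"
  by (induction w) (auto simp: hom_one dest: hom_mult[OF hom_X12])

definition delta :: "'k::comm_ring_1 ser \<Rightarrow> 'k ser" where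
  "delta f = Ser (\<lambda>p. \<Sum>w\<in>{w. length w = sz p}. cf f (w,[]) * cf (E w) p)"

lemma cf_delta: "cf (delta f) p = (\<Sum>w\<in>{w. length w = sz p}. cf f (w,[]) * cf (E w) p)"
  by (simp add: delta_def)

lemma delta_add: "delta (f + g) = delta f + delta g"
  by (rule ser_eqI) (simp add: cf_delta distrib_right sum.distrib)
lemma delta_diff: "delta (f - g) = delta f - delta g"
  by (rule ser_eqI) (simp add: cf_delta left_diff_distrib sum_subtractf)
lemma delta_0 [simp]: "delta 0 = 0"
  by (rule ser_eqI) (simp add: cf_delta)
lemma delta_sc_mult: "delta (sc c * f) = sc c * delta f"
  by (rule ser_eqI) (simp add: cf_delta sum_distrib_left mult.assoc)
lemma delta_sum: "delta (sum f A) = (\<Sum>i\<in>A. delta (f i))"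
  by (induction A rule: infinite_finite_induct) (auto simp: delta_add)

lemma delta_1 [simp]: "delta 1 = 1"
proof (rule ser_eqI)
  fix p :: "bool list \<times> bool list"
  have "cf (delta 1) p = (\<Sum>w\<in>{w. length w = sz p}. if w = [] then cf (E w) p else 0)"
    unfolding cf_delta by (rule sum.cong) (auto simp: cf_one)
  also have "\<dots> = (if sz p = 0 then cf 1 p else 0)"
    by (subst sum.delta) auto
  also have "\<dots> = cf 1 p" by (auto simp: cf_one sz_def)
  finally show "cf (delta 1) p = cf 1 p" .
qed

lemma delta_X1: "delta (X1 a) = X1 a + X2 a"
proof (rule ser_eqI)
  fix p :: "bool list \<times> bool list"
  have "cf (delta (X1 a)) p = (\<Sum>w\<in>{w. length w = sz p}. if w = [a] then cf (E w) p else 0)"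
    unfolding cf_delta by (rule sum.cong) (auto simp: X1_def cf_mon)
  also have "\<dots> = (if sz p = 1 then cf (E [a]) p else 0)"
    by (subst sum.delta) auto
  also have "\<dots> = cf (X1 a + X2 a) p"
    using hom_cf[OF hom_X12, of p a] by auto
  finally show "cf (delta (X1 a)) p = cf (X1 a + X2 a) p" .
qed

lemma inF_delta: "inF n f \<Longrightarrow> inF n (delta f)"
  unfolding inF_def cf_delta by (auto intro!: sum.neutral simp: sz_def)

lemma modF_delta: "modF n f g \<Longrightarrow> modF n (delta f) (delta g)"
  unfolding modF_def by (simp add: inF_delta flip: delta_diff)


lemma sum_words_split:
  "(\<Sum>w\<in>{w::bool list. length w = n}. \<Sum>i\<le>length w. G (take i w) (drop i w)) =
   (\<Sum>q\<in>WP n. G (fst q) (snd q))"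
proof -
  have "(\<Sum>w\<in>{w::bool list. length w = n}. \<Sum>i\<le>length w. G (take i w) (drop i w)) =
        (\<Sum>z\<in>Sigma {w::bool list. length w = n} (\<lambda>w. {..length w}). G (take (snd z) (fst z)) (drop (snd z) (fst z)))"
    by (subst sum.Sigma) (auto simp: split_def)
  also have "\<dots> = (\<Sum>q\<in>WP n. G (fst q) (snd q))"
    by (rule sum.reindex_bij_witness[where i="\<lambda>q. (fst q @ snd q, length (fst q))"
                                        and j="\<lambda>z. (take (snd z) (fst z), drop (snd z) (fst z))"])
       (auto simp: WP_def)
  finally show ?thesis .
qed

lemma delta_mult: "delta (f * g) = delta f * delta g"
proof (rule ser_eqI)
  fix p :: "bool list \<times> bool list"
  let ?H = "\<lambda>q x. cf f (fst q, []) * cf g (snd q, []) * (cf (E (fst q)) (fst x) * cf (E (snd q)) (snd x))"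
  have "cf (delta (f * g)) p =
     (\<Sum>w\<in>{w. length w = sz p}. \<Sum>i\<le>length w. cf f (take i w, []) * cf g (drop i w, []) *
          cf (E (take i w) * E (drop i w)) p)"
    unfolding cf_delta cf_mult_NilR sum_distrib_right
    by (simp flip: E_append)
  also have "\<dots> = (\<Sum>q\<in>WP (sz p). cf f (fst q, []) * cf g (snd q, []) * cf (E (fst q) * E (snd q)) p)"
    by (rule sum_words_split)
  also have "\<dots> = (\<Sum>q\<in>WP (sz p). \<Sum>x\<in>splits p. ?H q x)"
    by (simp add: cf_mult sum_distrib_left)
  also have "\<dots> = (\<Sum>x\<in>splits p. \<Sum>q\<in>WP (sz p). ?H q x)"
    by (rule sum.swap)
  also have "\<dots> = (\<Sum>x\<in>splits p. \<Sum>q\<in>{w. length w = sz (fst x)} \<times> {w. length w = sz (snd x)}. ?H q x)"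
  proof (rule sum.cong[OF refl])
    fix x assume x: "x \<in> splits p"
    then have sx: "sz (fst x) + sz (snd x) = sz p" by (auto simp: splits_def)
    show "(\<Sum>q\<in>WP (sz p). ?H q x) = (\<Sum>q\<in>{w. length w = sz (fst x)} \<times> {w. length w = sz (snd x)}. ?H q x)"
    proof (rule sum.mono_neutral_right)
      show "{w. length w = sz (fst x)} \<times> {w. length w = sz (snd x)} \<subseteq> WP (sz p)"
        using sx by (auto simp: WP_def)
      show "\<forall>q\<in>WP (sz p) - {w. length w = sz (fst x)} \<times> {w. length w = sz (snd x)}. ?H q x = 0"
      proof
        fix q assume "q \<in> WP (sz p) - {w. length w = sz (fst x)} \<times> {w. length w = sz (snd x)}"
        then have "sz (fst x) \<noteq> length (fst q) \<or> sz (snd x) \<noteq> length (snd q)" by (auto simp: mem_Times_iff)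
        then show "?H q x = 0" using hom_cf[OF hom_E] by (metis mult_zero_left mult_zero_right)
      qed
    qed simp
  qed
  also have "\<dots> = cf (delta f * delta g) p"
    unfolding cf_mult cf_delta sum_product
    by (rule sum.cong[OF refl]) (simp add: sum.cartesian_product mult_ac split_def)
  finally show "cf (delta (f * g)) p = cf (delta f * delta g) p" .
qed

lemma delta_power: "delta (f ^ n) = delta f ^ n"
  by (induction n) (simp_all add: delta_mult)

lemma delta_sig:
  assumes h: "inF 1 h"
  shows "delta (sig h a) = sig (delta h) a"
proof (rule modF_all_eq)
  fix K
  have dh: "inF 1 (delta h)" by (rule inF_delta[OF h])
  have "modF (Suc K) (delta (sig h a)) (delta (ptr a h K))"
    by (rule modF_delta[OF sig_trunc[OF h]])
  moreover have "delta (ptr a h K) = ptr a (delta h) K"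
    by (simp add: ptr_def delta_sum delta_sc_mult delta_power)
  moreover have "modF (Suc K) (sig (delta h) a) (ptr a (delta h) K)"
    by (rule sig_trunc[OF dh])
  ultimately show "modF (Suc K) (delta (sig h a)) (sig (delta h) a)"
    by (metis modF_sym modF_trans)
qed

lemma delta_texp: "inF 1 h \<Longrightarrow> delta (texp h) = texp (delta h)"
  by (simp add: texp_def delta_sig)

lemma sum_single:
  assumes "finite A" "xz \<in> A" "\<And>x. x \<in> A \<Longrightarrow> x \<noteq> xz \<Longrightarrow> G x = 0"
  shows "sum G A = G xz"
proof -
  have "sum G A = G xz + sum G (A - {xz})" using assms by (simp add: sum.remove)
  also have "sum G (A - {xz}) = 0" using assms by (intro sum.neutral) auto
  finally show ?thesis by simp
qed

lemma splits_fst_eq: "x \<in> splits p \<Longrightarrow> y \<in> splits p \<Longrightarrow> fst x = fst y \<Longrightarrow> x = y"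
  by (cases x; cases y) (auto simp: splits_def pap_def)

lemma splits_snd_eq: "x \<in> splits p \<Longrightarrow> y \<in> splits p \<Longrightarrow> snd x = snd y \<Longrightarrow> x = y"
  by (cases x; cases y) (auto simp: splits_def pap_def)

lemma cf_mon_mult_single:
  assumes "(q, r) \<in> splits p"
  shows "cf (mon q * T) p = cf T r"
proof -
  define xz where "xz = (q, r)"
  have assms: "xz \<in> splits p" "fst xz = q" using assms by (auto simp: xz_def)
  have "cf (mon q * T) p = cf (mon q) (fst xz) * cf T (snd xz)"
    unfolding cf_mult
  proof (rule sum_single[OF finite_splits assms(1)])
    fix x assume "x \<in> splits p" "x \<noteq> xz"
    then have "fst x \<noteq> q" using splits_fst_eq assms by metis
    then show "cf (mon q) (fst x) * cf T (snd x) = 0" by (simp add: cf_mon)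
  qed
  then show ?thesis using assms by (simp add: cf_mon xz_def)
qed

lemma cf_mon_mult_none:
  assumes "\<And>x. x \<in> splits p \<Longrightarrow> fst x \<noteq> q"
  shows "cf (mon q * T) p = 0"
  unfolding cf_mult by (rule sum.neutral) (use assms in \<open>auto simp: cf_mon\<close>)

lemma cf_mult_mon_single:
  assumes "(r, q) \<in> splits p"
  shows "cf (T * mon q) p = cf T r"
proof -
  define xz where "xz = (r, q)"
  have assms: "xz \<in> splits p" "snd xz = q" using assms by (auto simp: xz_def)
  have "cf (T * mon q) p = cf T (fst xz) * cf (mon q) (snd xz)"
    unfolding cf_mult
  proof (rule sum_single[OF finite_splits assms(1)])
    fix x assume "x \<in> splits p" "x \<noteq> xz"
    then have "snd x \<noteq> q" using splits_snd_eq assms by metis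
    then show "cf T (fst x) * cf (mon q) (snd x) = 0" by (simp add: cf_mon)
  qed
  then show ?thesis using assms by (simp add: cf_mon xz_def)
qed

lemma cf_mult_mon_none:
  assumes "\<And>x. x \<in> splits p \<Longrightarrow> snd x \<noteq> q"
  shows "cf (T * mon q) p = 0"
  unfolding cf_mult by (rule sum.neutral) (use assms in \<open>auto simp: cf_mon\<close>)

lemma cf_X1_mult: "cf (X1 a * T) (u,v) = (case u of [] \<Rightarrow> 0 | b # u' \<Rightarrow> if b = a then cf T (u',v) else 0)"
proof (cases "u \<noteq> [] \<and> hd u = a")
  case True
  then obtain u' where u: "u = a # u'" by (cases u) auto
  have "cf (X1 a * T) (u,v) = cf T (u',v)" unfolding X1_def
    by (rule cf_mon_mult_single) (simp_all add: u splits_def pap_def)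
  then show ?thesis by (simp add: u)
next
  case False
  have "cf (X1 a * T) (u,v) = 0" unfolding X1_def
  proof (rule cf_mon_mult_none)
    fix x assume x: "x \<in> splits (u,v)"
    show "fst x \<noteq> ([a],[])"
    proof
      assume "fst x = ([a],[])"
      then have "u = a # fst (snd x)" using x by (auto simp: splits_def pap_def)
      then show False using False by simp
    qed
  qed
  then show ?thesis using False by (cases u) auto
qed

lemma cf_X2_mult: "cf (X2 a * T) (u,v) = (case v of [] \<Rightarrow> 0 | b # v' \<Rightarrow> if b = a then cf T (u,v') else 0)"
proof (cases "v \<noteq> [] \<and> hd v = a")
  case True
  then obtain v' where v: "v = a # v'" by (cases v) auto
  have "cf (X2 a * T) (u,v) = cf T (u,v')" unfolding X2_def
    by (rule cf_mon_mult_single) (simp_all add: v splits_def pap_def)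
  then show ?thesis by (simp add: v)
next
  case False
  have "cf (X2 a * T) (u,v) = 0" unfolding X2_def
  proof (rule cf_mon_mult_none)
    fix x assume x: "x \<in> splits (u,v)"
    show "fst x \<noteq> ([],[a])"
    proof
      assume "fst x = ([],[a])"
      then have "v = a # snd (snd x)" using x by (auto simp: splits_def pap_def)
      then show False using False by simp
    qed
  qed
  then show ?thesis using False by (cases v) auto
qed

lemma cf_mult_X1_Nil: "cf (T * X1 a) (w,[]) = (if w \<noteq> [] \<and> last w = a then cf T (butlast w, []) else 0)"
proof (cases "w \<noteq> [] \<and> last w = a")
  case True
  then have w: "w = butlast w @ [a]" using append_butlast_last_id[of w] by simp
  have "cf (T * X1 a) (w,[]) = cf T (butlast w,[])" unfolding X1_def
    by (rule cf_mult_mon_single) (simp add: splits_def pap_def flip: w)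
  then show ?thesis using True by simp
next
  case False
  have "cf (T * X1 a) (w,[]) = 0" unfolding X1_def
  proof (rule cf_mult_mon_none)
    fix x assume x: "x \<in> splits (w,[])"
    show "snd x \<noteq> ([a],[])"
    proof
      assume "snd x = ([a],[])"
      then have "w = fst (fst x) @ [a]" using x by (auto simp: splits_def pap_def)
      then show False using False by simp
    qed
  qed
  then show ?thesis by (simp only: if_not_P[OF False])
qed

section \<open>The operators Phi and Psi\<close>

definition Psi :: "'k::comm_ring_1 ser \<Rightarrow> 'k ser" where
  "Psi T = Ser (\<lambda>p. if snd p = [] then
     (\<Sum>i\<le>length (fst p). cf T (take i (fst p), rev (drop i (fst p))) * (-1)^(length (fst p) - i)) else 0)"

definition Phi :: "'k::comm_ring_1 ser \<Rightarrow> 'k ser" where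
  "Phi T = Ser (\<lambda>p. if snd p = [] then
     (\<Sum>i\<le>length (fst p). cf T (take i (fst p), rev (drop i (fst p))) * of_nat i * (-1)^(length (fst p) - i)) else 0)"

lemma cf_Psi: "cf (Psi T) (w,v) = (if v = [] then
     (\<Sum>i\<le>length w. cf T (take i w, rev (drop i w)) * (-1)^(length w - i)) else 0)"
  by (simp add: Psi_def)

lemma cf_Phi: "cf (Phi T) (w,v) = (if v = [] then
     (\<Sum>i\<le>length w. cf T (take i w, rev (drop i w)) * of_nat i * (-1)^(length w - i)) else 0)"
  by (simp add: Phi_def)

lemma isA_Psi: "isA (Psi T)" by (simp add: isA_def cf_Psi)
lemma isA_Phi: "isA (Phi T)" by (simp add: isA_def cf_Phi)
lemma isA_X1: "isA (X1 a)" by (simp add: isA_def X1_def cf_mon)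

lemma Psi_add: "Psi (S + T) = Psi S + Psi T"
  by (rule ser_eqI) (auto simp: Psi_def distrib_right sum.distrib)
lemma Phi_add: "Phi (S + T) = Phi S + Phi T"
  by (rule ser_eqI) (auto simp: Phi_def distrib_right sum.distrib)

lemma isA_cf: "isA f \<Longrightarrow> v \<noteq> [] \<Longrightarrow> cf f (u,v) = 0" by (simp add: isA_def)

lemma Phi_X1: "Phi (X1 a * T) = X1 a * (Phi T + Psi T)"
proof (rule ser_eqI)
  fix p :: "bool list \<times> bool list"
  obtain w v where p: "p = (w,v)" by (cases p)
  show "cf (Phi (X1 a * T)) p = cf (X1 a * (Phi T + Psi T)) p"
  proof (cases "v = []")
    case False
    have "isA (X1 a * (Phi T + Psi T))" by (intro isA_mult isA_add isA_X1 isA_Phi isA_Psi)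
    then show ?thesis using False by (simp add: p cf_Phi isA_cf)
  next
    case True
    show ?thesis
    proof (cases w)
      case Nil
      then show ?thesis by (simp add: p True cf_Phi cf_X1_mult)
    next
      case (Cons b w')
      have "cf (Phi (X1 a * T)) p = (\<Sum>i\<le>Suc (length w'). cf (X1 a * T) (take i w, rev (drop i w)) * of_nat i * (-1)^(Suc (length w') - i))"
        by (simp add: p True cf_Phi Cons)
      also have "\<dots> = (\<Sum>i\<le>length w'. cf (X1 a * T) (take (Suc i) w, rev (drop (Suc i) w)) * of_nat (Suc i) * (-1)^(length w' - i))"
        by (subst sum.atMost_Suc_shift) (simp add: cf_X1_mult)
      also have "\<dots> = (if b = a then (\<Sum>i\<le>length w'. cf T (take i w', rev (drop i w')) * (of_nat i + 1) * (-1)^(length w' - i)) else 0)"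
        by (simp add: Cons cf_X1_mult add.commute)
      also have "\<dots> = cf (X1 a * (Phi T + Psi T)) p"
        by (simp add: p True Cons cf_X1_mult cf_Phi cf_Psi distrib_left distrib_right sum.distrib)
      finally show ?thesis .
    qed
  qed
qed

lemma Psi_X1: "Psi (X1 a * T) = X1 a * Psi T"
proof (rule ser_eqI)
  fix p :: "bool list \<times> bool list"
  obtain w v where p: "p = (w,v)" by (cases p)
  show "cf (Psi (X1 a * T)) p = cf (X1 a * Psi T) p"
  proof (cases "v = []")
    case False
    have "isA (X1 a * Psi T)" by (intro isA_mult isA_X1 isA_Psi)
    then show ?thesis using False by (simp add: p cf_Psi isA_cf)
  next
    case True
    show ?thesis
    proof (cases w)
      case Nil
      then show ?thesis by (simp add: p True cf_Psi cf_X1_mult)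
    next
      case (Cons b w')
      have "cf (Psi (X1 a * T)) p = (\<Sum>i\<le>Suc (length w'). cf (X1 a * T) (take i w, rev (drop i w)) * (-1)^(Suc (length w') - i))"
        by (simp add: p True cf_Psi Cons)
      also have "\<dots> = (\<Sum>i\<le>length w'. cf (X1 a * T) (take (Suc i) w, rev (drop (Suc i) w)) * (-1)^(length w' - i))"
        by (subst sum.atMost_Suc_shift) (simp add: cf_X1_mult)
      also have "\<dots> = cf (X1 a * Psi T) p"
        by (simp add: p True Cons cf_X1_mult cf_Psi)
      finally show ?thesis .
    qed
  qed
qed

lemma take_append_le: "i \<le> length w \<Longrightarrow> take i (w @ [b]) = take i w" by simp
lemma drop_append_le: "i \<le> length w \<Longrightarrow> drop i (w @ [b]) = drop i w @ [b]" by simp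

lemma Phi_X2: "Phi (X2 a * T) = - (Phi T * X1 a)"
proof (rule ser_eqI)
  fix p :: "bool list \<times> bool list"
  obtain w v where p: "p = (w,v)" by (cases p)
  show "cf (Phi (X2 a * T)) p = cf (- (Phi T * X1 a)) p"
  proof (cases "v = []")
    case False
    have "isA (Phi T * X1 a)" by (intro isA_mult isA_X1 isA_Phi)
    then show ?thesis using False by (simp add: p cf_Phi isA_cf)
  next
    case True
    show ?thesis
    proof (cases w rule: rev_exhaust)
      case Nil
      then show ?thesis by (simp add: p True cf_Phi cf_X2_mult cf_mult_X1_Nil)
    next
      case (snoc w' b)
      have "cf (Phi (X2 a * T)) p = (\<Sum>i\<le>Suc (length w'). cf (X2 a * T) (take i w, rev (drop i w)) * of_nat i * (-1)^(Suc (length w') - i))"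
        by (simp add: p True cf_Phi snoc)
      also have "\<dots> = (\<Sum>i\<le>length w'. cf (X2 a * T) (take i w, rev (drop i w)) * of_nat i * (-1)^(Suc (length w') - i))"
        by (subst sum.atMost_Suc) (simp add: snoc cf_X2_mult)
      also have "\<dots> = (\<Sum>i\<le>length w'. (if b = a then - (cf T (take i w', rev (drop i w')) * of_nat i * (-1)^(length w' - i)) else 0))"
        by (rule sum.cong[OF refl]) (auto simp: snoc cf_X2_mult Suc_diff_le)
      also have "\<dots> = cf (- (Phi T * X1 a)) p"
        by (simp add: p True snoc cf_mult_X1_Nil cf_Phi sum_negf)
      finally show ?thesis .
    qed
  qed
qed

lemma Psi_X2: "Psi (X2 a * T) = - (Psi T * X1 a)"
proof (rule ser_eqI)
  fix p :: "bool list \<times> bool list"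
  obtain w v where p: "p = (w,v)" by (cases p)
  show "cf (Psi (X2 a * T)) p = cf (- (Psi T * X1 a)) p"
  proof (cases "v = []")
    case False
    have "isA (Psi T * X1 a)" by (intro isA_mult isA_X1 isA_Psi)
    then show ?thesis using False by (simp add: p cf_Psi isA_cf)
  next
    case True
    show ?thesis
    proof (cases w rule: rev_exhaust)
      case Nil
      then show ?thesis by (simp add: p True cf_Psi cf_X2_mult cf_mult_X1_Nil)
    next
      case (snoc w' b)
      have "cf (Psi (X2 a * T)) p = (\<Sum>i\<le>Suc (length w'). cf (X2 a * T) (take i w, rev (drop i w)) * (-1)^(Suc (length w') - i))"
        by (simp add: p True cf_Psi snoc)
      also have "\<dots> = (\<Sum>i\<le>length w'. cf (X2 a * T) (take i w, rev (drop i w)) * (-1)^(Suc (length w') - i))"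
        by (subst sum.atMost_Suc) (simp add: snoc cf_X2_mult)
      also have "\<dots> = (\<Sum>i\<le>length w'. (if b = a then - (cf T (take i w', rev (drop i w')) * (-1)^(length w' - i)) else 0))"
        by (rule sum.cong[OF refl]) (auto simp: snoc cf_X2_mult Suc_diff_le)
      also have "\<dots> = cf (- (Psi T * X1 a)) p"
        by (simp add: p True snoc cf_mult_X1_Nil cf_Psi sum_negf)
      finally show ?thesis .
    qed
  qed
qed


lemma Psi_uminus: "Psi (- T) = - Psi T"
  by (rule ser_eqI) (auto simp: Psi_def sum_negf)
lemma Phi_uminus: "Phi (- T) = - Phi T"
  by (rule ser_eqI) (auto simp: Phi_def sum_negf)
lemma Psi_diff: "Psi (S - T) = Psi S - Psi T"
  using Psi_add[of S "- T"] by (simp add: Psi_uminus)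
lemma Phi_diff: "Phi (S - T) = Phi S - Phi T"
  using Phi_add[of S "- T"] by (simp add: Phi_uminus)

lemma Psi_1: "Psi 1 = 1"
proof (rule ser_eqI)
  fix p :: "bool list \<times> bool list"
  obtain w v where p: "p = (w,v)" by (cases p)
  show "cf (Psi 1) p = cf 1 p"
  proof (cases "v = [] \<and> w = []")
    case True then show ?thesis by (simp add: p cf_Psi cf_one)
  next
    case False
    have "cf (Psi 1) (w,v) = 0"
    proof (cases "v = []")
      case True
      then have "w \<noteq> []" using False by simp
      then show ?thesis using True
        by (auto simp: cf_Psi cf_one intro!: sum.neutral)
    qed (simp add: cf_Psi)
    then show ?thesis using False by (auto simp: p cf_one)
  qed
qed

lemma Phi_1: "Phi 1 = 0"
proof (rule ser_eqI)
  fix p :: "bool list \<times> bool list"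
  obtain w v where p: "p = (w,v)" by (cases p)
  show "cf (Phi 1) p = cf 0 p"
    by (auto simp: p cf_Phi cf_one intro!: sum.neutral)
qed

definition rn :: "bool list \<Rightarrow> 'k::comm_ring_1 ser" where
  "rn w = rnest (\<lambda>x y. x * y - y * x) (map X1 w)"

lemma rn_simps [simp]: "rn [] = 0" "rn [a] = X1 a" "rn (a # b # w) = X1 a * rn (b # w) - rn (b # w) * X1 a"
  by (simp_all add: rn_def)

lemma Psi_E: "Psi (E w :: 'k::comm_ring_1 ser) = (if w = [] then 1 else 0)"
proof (induction w)
  case Nil then show ?case by (simp add: Psi_1)
next
  case (Cons a w)
  have "Psi (E (a # w)) = (X1 a * Psi (E w) - Psi (E w) * X1 a :: 'k ser)"
    by (simp add: distrib_right Psi_add Psi_X1 Psi_X2)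
  then show ?case using Cons by (simp del: E.simps)
qed

lemma Phi_E: "Phi (E w :: 'k::comm_ring_1 ser) = rn w"
proof (induction w)
  case Nil then show ?case by (simp add: Phi_1)
next
  case (Cons a w)
  have "Phi (E (a # w)) = (X1 a * (Phi (E w) + Psi (E w)) - Phi (E w) * X1 a :: 'k ser)"
    by (simp add: distrib_right Phi_add Phi_X1 Phi_X2)
  then show ?case using Cons by (cases w) (simp_all add: Psi_E del: E.simps)
qed

definition theta :: "'k::comm_ring_1 ser \<Rightarrow> 'k ser" where
  "theta f = Ser (\<lambda>p. if snd p = [] then
     (\<Sum>w'\<in>{w'. length w' = length (fst p)}. cf f (w',[]) * cf (rn w') p) else 0)"

lemma cf_theta: "cf (theta f) (w,v) = (if v = [] then
     (\<Sum>w'\<in>{w'. length w' = length w}. cf f (w',[]) * cf (rn w') (w,v)) else 0)"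
  by (simp add: theta_def)

lemma Phi_delta: "Phi (delta f) = theta f"
proof (rule ser_eqI)
  fix p :: "bool list \<times> bool list"
  obtain w v where p: "p = (w,v)" by (cases p)
  show "cf (Phi (delta f)) p = cf (theta f) p"
  proof (cases "v = []")
    case False then show ?thesis by (simp add: p cf_Phi cf_theta)
  next
    case True
    have sz: "i \<le> length w \<Longrightarrow> sz (take i w, rev (drop i w)) = length w" for i
      by (simp add: sz_def)
    have "cf (Phi (delta f)) p = (\<Sum>i\<le>length w. (\<Sum>w'\<in>{w'. length w' = length w}.
            cf f (w',[]) * cf (E w') (take i w, rev (drop i w))) * of_nat i * (-1)^(length w - i))"
      by (auto simp: p True cf_Phi cf_delta sz intro!: sum.cong)
    also have "\<dots> = (\<Sum>w'\<in>{w'. length w' = length w}. cf f (w',[]) * (\<Sum>i\<le>length w.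
            cf (E w') (take i w, rev (drop i w)) * of_nat i * (-1)^(length w - i)))"
      by (simp add: sum_distrib_left sum_distrib_right mult_ac) (rule sum.swap)
    also have "\<dots> = (\<Sum>w'\<in>{w'. length w' = length w}. cf f (w',[]) * cf (Phi (E w')) (w,[]))"
      by (simp add: cf_Phi)
    also have "\<dots> = cf (theta f) p"
      by (simp add: p True cf_theta Phi_E)
    finally show ?thesis .
  qed
qed

lemma theta_primitive:
  assumes A: "isA Z" and prim: "delta Z = Z + sw Z"
  shows "cf (theta Z) (w,[]) = of_nat (length w) * cf Z (w,[])"
proof -
  have "cf (theta Z) (w,[]) = cf (Phi Z) (w,[]) + cf (Phi (sw Z)) (w,[])"
    by (simp flip: Phi_delta add: prim Phi_add)
  moreover have "cf (Phi Z) (w,[]) = cf Z (w,[]) * of_nat (length w)"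
  proof -
    have "cf (Phi Z) (w,[]) = cf Z (take (length w) w, rev (drop (length w) w)) * of_nat (length w) * (-1)^(length w - length w)"
      unfolding cf_Phi if_P[OF refl]
    proof (rule sum_single)
      fix i assume "i \<in> {..length w}" "i \<noteq> length w"
      then have "drop i w \<noteq> []" by simp
      then show "cf Z (take i w, rev (drop i w)) * of_nat i * (- 1) ^ (length w - i) = 0"
        using isA_cf[OF A] by simp
    qed simp_all
    then show ?thesis by simp
  qed
  moreover have "cf (Phi (sw Z)) (w,[]) = 0"
    unfolding cf_Phi if_P[OF refl]
  proof (rule sum.neutral, rule ballI)
    fix i assume i: "i \<in> {..length w}"
    show "cf (sw Z) (take i w, rev (drop i w)) * of_nat i * (- 1) ^ (length w - i) = 0"
    proof (cases "i = 0")
      case False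
      then have "take i w \<noteq> []" using i by auto
      then show ?thesis using isA_cf[OF A] by (simp add: cf_sw)
    qed simp
  qed
  ultimately show ?thesis by (simp add: mult.commute)
qed

lemma power_diff_inF:
  fixes a b :: "'k::comm_ring_1 ser"
  assumes a: "inF 1 a" and b: "inF 1 b" and ab: "inF m (a - b)"
  shows "inF (m + i) (a ^ Suc i - b ^ Suc i)"
proof (induction i)
  case 0 then show ?case using ab by simp
next
  case (Suc i)
  have "a ^ Suc (Suc i) - b ^ Suc (Suc i) = a * (a ^ Suc i - b ^ Suc i) + (a - b) * b ^ Suc i"
    by (simp add: algebra_simps)
  moreover have "inF (m + Suc i) (a * (a ^ Suc i - b ^ Suc i))"
    using inF_mult[OF a Suc] by simp
  moreover have "inF (m + Suc i) ((a - b) * b ^ Suc i)"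
    using inF_mult[OF ab inF_power[OF b, of "Suc i"]] by simp
  ultimately show ?case by (simp add: inF_add)
qed

lemma texp_inj:
  fixes a b :: "'k::field_char_0 ser"
  assumes a: "inF 1 a" and b: "inF 1 b" and e: "texp a = texp b"
  shows "a = b"
proof (rule modF_all_eq)
  fix K show "modF (Suc K) a b"
  proof (induction K)
    case 0 then show ?case using a b by (simp add: modF_def inF_diff)
  next
    case (Suc K)
    define t where "t i = sc (1 / fact i) * (a ^ i - b ^ i) - (if i = 1 then a - b else 0)" for i
    define Pa where "Pa = (\<Sum>i\<le>Suc K. sc (1 / fact i) * a^i)"
    define Pb where "Pb = (\<Sum>i\<le>Suc K. sc (1 / fact i) * b^i)"
    have ta: "modF (Suc (Suc K)) (texp a) Pa" unfolding Pa_def by (rule texp_trunc[OF a])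
    have tb: "modF (Suc (Suc K)) (texp b) Pb" unfolding Pb_def by (rule texp_trunc[OF b])
    have "modF (Suc (Suc K)) Pa Pb"
      by (rule modF_trans[OF modF_sym[OF ta]]) (simp only: e tb)
    then have D: "inF (Suc (Suc K)) (Pa - Pb)" by (simp only: modF_def)
    have ti: "inF (Suc (Suc K)) (t i)" for i
    proof (cases "i \<ge> 2")
      case True
      then obtain j where j: "i = Suc (Suc j)" by (metis add_2_eq_Suc le_Suc_ex)
      have ab: "inF (Suc K) (a - b)" using Suc by (simp only: modF_def)
      have "inF (Suc K + Suc j) (a ^ i - b ^ i)"
        unfolding j by (rule power_diff_inF[OF a b ab])
      then have "inF (Suc (Suc K)) (a ^ i - b ^ i)" by (rule inF_mono[rotated]) simp
      then show ?thesis using True by (simp add: t_def inF_sc_mult)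
    next
      case False
      then have "i = 0 \<or> i = 1" by auto
      then show ?thesis by (auto simp: t_def)
    qed
    have s1: "(\<Sum>i\<le>Suc K. t i) = (\<Sum>i\<le>Suc K. sc (1 / fact i) * (a^i - b^i)) - (\<Sum>i\<le>Suc K. if i = 1 then a - b else 0)"
      unfolding t_def by (rule sum_subtractf)
    have s2: "(\<Sum>i\<le>Suc K. if i = 1 then a - b else 0) = a - b"
      by (subst sum.delta) auto
    have s3: "(\<Sum>i\<le>Suc K. sc (1 / fact i) * (a^i - b^i)) = Pa - Pb"
      unfolding Pa_def Pb_def by (simp only: right_diff_distrib sum_subtractf)
    have "inF (Suc (Suc K)) ((Pa - Pb) - (a - b))"
      using inF_sum[of "{..Suc K}" "Suc (Suc K)" t] ti s1 s2 s3 by simp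
    from inF_diff[OF D this] show ?case by (simp add: modF_def)
  qed
qed

section \<open>The element Z\<close>

definition XA :: "'k::comm_ring_1 ser" where "XA = X1 False"
definition YA :: "'k::comm_ring_1 ser" where "YA = X1 True"

definition gg :: "'k::field_char_0 ser" where "gg = texp XA * texp YA"
definition ZZ :: "'k::field_char_0 ser" where "ZZ = tlog (gg - 1)"

lemma inF_X1: "inF 1 (X1 a)" by (simp add: inF_def X1_def cf_mon sz_def)
lemma inF_X2: "inF 1 (X2 a)" by (simp add: inF_def X2_def cf_mon sz_def)
lemma isB_X2: "isB (X2 a)" by (simp add: isB_def X2_def cf_mon)
lemma sw_X1: "sw (X1 a) = X2 a" by (rule ser_eqI) (auto simp: cf_sw' X1_def X2_def cf_mon prod_eq_iff)

lemma inF_texp1: "inF 1 f \<Longrightarrow> inF 1 (texp f - 1)"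
  unfolding texp_def by (auto simp: inF_def cf_sig sz_def cf_one)

lemma inF_gg: "inF 1 (gg - 1)"
proof -
  have "gg - 1 = (texp XA - 1) * (texp YA - 1) + (texp XA - 1) + (texp YA - 1)"
    by (simp add: gg_def algebra_simps)
  then show ?thesis
    using inF_texp1[OF inF_X1[of False]] inF_texp1[OF inF_X1[of True]]
    by (metis XA_def YA_def add_0 inF_add inF_mult_left)
qed

lemma isA_gg: "isA gg"
  by (simp add: gg_def XA_def YA_def isA_mult isA_texp isA_X1)

lemma texp_ZZ: "texp ZZ = gg"
  unfolding ZZ_def using texp_tlog[OF inF_gg] by simp

lemma inF_ZZ: "inF 1 ZZ" unfolding ZZ_def by (rule inF_tlog[OF inF_gg])
lemma isA_ZZ: "isA ZZ" unfolding ZZ_def by (intro isA_tlog isA_diff isA_gg isA_1)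

lemma isB_texp: "isA f \<Longrightarrow> isB (sw (texp f))"
  by (intro isB_sw isA_texp)

lemma delta_texp_X1: "delta (texp (X1 a)) = texp (X1 a) * sw (texp (X1 a))"
proof -
  have "delta (texp (X1 a)) = texp (X1 a + X2 a)"
    by (simp add: delta_texp[OF inF_X1] delta_X1)
  also have "\<dots> = texp (X1 a) * texp (X2 a)"
    by (rule texp_add[OF inF_X1 inF_X2 AB_commute[OF isA_X1 isB_X2]])
  finally show ?thesis by (simp add: sw_texp sw_X1)
qed

lemma delta_gg: "delta gg = gg * sw gg"
proof -
  let ?x = "texp (XA :: 'a ser)" and ?y = "texp (YA :: 'a ser)"
  have "delta gg = ?x * sw ?x * (?y * sw ?y)"
    by (simp add: gg_def delta_mult XA_def YA_def delta_texp_X1)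
  also have "\<dots> = ?x * (sw ?x * ?y) * sw ?y" by (simp add: mult.assoc)
  also have "sw ?x * ?y = ?y * sw ?x"
    by (rule AB_commute[symmetric]) (simp_all add: YA_def isA_texp isA_X1 isB_texp XA_def)
  also have "?x * (?y * sw ?x) * sw ?y = ?x * ?y * (sw ?x * sw ?y)"
    by (simp add: mult.assoc)
  finally show ?thesis by (simp add: gg_def sw_mult)
qed

lemma delta_ZZ: "delta ZZ = ZZ + sw ZZ"
proof (rule texp_inj)
  show "inF 1 (delta ZZ)" by (rule inF_delta[OF inF_ZZ])
  show "inF 1 (ZZ + sw ZZ)" by (intro inF_add inF_ZZ inF_sw)
  have "texp (ZZ + sw ZZ) = texp ZZ * texp (sw ZZ)"
    by (rule texp_add[OF inF_ZZ inF_sw[OF inF_ZZ] AB_commute[OF isA_ZZ isB_sw[OF isA_ZZ]]])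
  also have "\<dots> = gg * sw gg" by (simp add: texp_ZZ flip: sw_texp)
  also have "\<dots> = texp (delta ZZ)" by (simp add: delta_texp[OF inF_ZZ, symmetric] texp_ZZ delta_gg)
  finally show "texp (delta ZZ) = texp (ZZ + sw ZZ)" by (rule sym)
qed

lemma theta_ZZ: "cf (theta ZZ) (w,[]) = of_nat (length w) * cf ZZ (w,[])"
  by (rule theta_primitive[OF isA_ZZ delta_ZZ])


lemma power_sum_lists:
  fixes m :: "'b \<Rightarrow> 'a::ring_1"
  assumes S: "finite S"
  shows "(\<Sum>q\<in>S. m q) ^ n = (\<Sum>ws\<in>{ws. set ws \<subseteq> S \<and> length ws = n}. prod_list (map m ws))"
proof (induction n)
  case 0
  have "{ws. set ws \<subseteq> S \<and> length ws = 0} = {[]}" by auto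
  then show ?case by simp
next
  case (Suc n)
  have fin: "finite {ws. set ws \<subseteq> S \<and> length ws = n}"
    using finite_lists_length_le[OF S, of n] by (rule finite_subset[rotated]) auto
  have "(\<Sum>q\<in>S. m q) ^ Suc n = (\<Sum>q\<in>S. m q) * (\<Sum>ws\<in>{ws. set ws \<subseteq> S \<and> length ws = n}. prod_list (map m ws))"
    by (simp add: Suc)
  also have "\<dots> = (\<Sum>z\<in>S \<times> {ws. set ws \<subseteq> S \<and> length ws = n}. m (fst z) * prod_list (map m (snd z)))"
    by (simp add: sum_product sum.cartesian_product split_def)
  also have "\<dots> = (\<Sum>ws\<in>{ws. set ws \<subseteq> S \<and> length ws = Suc n}. prod_list (map m ws))"
    by (rule sum.reindex_bij_witness[where i="\<lambda>ws. (hd ws, tl ws)" and j="\<lambda>z. fst z # snd z"])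
       (auto simp: length_Suc_conv)
  finally show ?case .
qed

lemma mon_mult: "mon p * mon q = (mon (pap p q) :: 'k::comm_ring_1 ser)"
proof (rule ser_eqI)
  fix r
  show "cf (mon p * mon q) r = cf (mon (pap p q)) r"
  proof (cases "r = pap p q")
    case True
    then show ?thesis by (simp add: cf_mon_mult_single[where r=q] splits_def cf_mon)
  next
    case False
    have "cf (mon p * mon q) r = 0"
      unfolding cf_mult
    proof (rule sum.neutral, rule ballI)
      fix x assume "x \<in> splits r"
      then have "pap (fst x) (snd x) = r" by (auto simp: splits_def)
      then show "cf (mon p) (fst x) * cf (mon q) (snd x) = 0" using False by (auto simp: cf_mon)
    qed
    then show ?thesis using False by (simp add: cf_mon)
  qed
qed

lemma mon_Nil: "mon ([],[]) = (1 :: 'k::comm_ring_1 ser)"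
  by (rule ser_eqI) (simp add: cf_mon cf_one)

lemma X1_power: "X1 a ^ r = (mon (replicate r a, []) :: 'k::comm_ring_1 ser)"
  by (induction r) (simp_all add: mon_Nil X1_def mon_mult pap_def)

definition dl :: "(nat \<times> nat) list \<Rightarrow> bool list" where
  "dl ws = dynkin_letters False True ws"

definition mq :: "nat \<times> nat \<Rightarrow> 'k::field_char_0 ser" where
  "mq q = sc (1 / (fact (fst q) * fact (snd q))) * mon (replicate (fst q) False @ replicate (snd q) True, [])"

lemma dl_Nil [simp]: "dl [] = []" by (simp add: dl_def dynkin_letters_def)
lemma dl_Cons: "dl (q # ws) = replicate (fst q) False @ replicate (snd q) True @ dl ws"
  by (simp add: dl_def dynkin_letters_def)

lemma prod_mq: "prod_list (map (mq :: _ \<Rightarrow> 'k::field_char_0 ser) ws) = sc (\<Prod>q\<leftarrow>ws. 1 / (fact (fst q) * fact (snd q))) * mon (dl ws, [])"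
proof (induction ws)
  case Nil then show ?case by (simp add: mon_Nil)
next
  case (Cons q ws)
  have "prod_list (map mq (q # ws)) = (mq q * prod_list (map mq ws) :: 'k ser)" by simp
  also have "\<dots> = mq q * (sc (\<Prod>q\<leftarrow>ws. 1 / (fact (fst q) * fact (snd q))) * mon (dl ws, []))"
    by (simp only: Cons)
  also have "\<dots> = sc (1 / (fact (fst q) * fact (snd q)) * (\<Prod>q\<leftarrow>ws. 1 / (fact (fst q) * fact (snd q)))) *
      mon (dl (q # ws), [])"
    by (simp only: mq_def sc_mult_mult mon_mult) (simp add: pap_def dl_Cons)
  finally show ?case by simp
qed

lemma length_dl: "length (dl ws) = (\<Sum>q\<leftarrow>ws. fst q + snd q)"
  by (induction ws) (simp_all add: dl_Cons)

lemma gg_trunc: "modF (Suc K) gg (\<Sum>q\<in>{..K} \<times> {..K}. mq q)"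
proof -
  have "modF (Suc K) gg ((\<Sum>r\<le>K. sc (1 / fact r) * XA ^ r) * (\<Sum>s\<le>K. sc (1 / fact s) * YA ^ s))"
    unfolding gg_def XA_def YA_def by (rule modF_mult; rule texp_trunc; rule inF_X1)
  also have "(\<Sum>r\<le>K. sc (1 / fact r) * XA ^ r) * (\<Sum>s\<le>K. sc (1 / fact s) * YA ^ s) = (\<Sum>q\<in>{..K} \<times> {..K}. mq q)"
    by (simp add: sum_product sum.cartesian_product split_def mq_def sc_mult_mult XA_def YA_def X1_power mon_mult pap_def)
  finally show ?thesis .
qed


definition SK :: "nat \<Rightarrow> (nat \<times> nat) set" where
  "SK K = {..K} \<times> {..K} - {(0,0)}"

definition cZ :: "(nat \<times> nat) list \<Rightarrow> 'k::field_char_0" where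
  "cZ ws = (-1) ^ (length ws - 1) / (of_nat (length ws) * (\<Prod>q\<leftarrow>ws. fact (fst q) * fact (snd q)))"

lemma finite_SK [simp]: "finite (SK K)" by (simp add: SK_def)

lemma gg1_trunc: "modF (Suc K) (gg - 1) (\<Sum>q\<in>SK K. (mq q :: 'k::field_char_0 ser))"
proof -
  have "(\<Sum>q\<in>{..K} \<times> {..K}. mq q) = mq (0,0) + (\<Sum>q\<in>SK K. (mq q :: 'k ser))"
    unfolding SK_def by (rule sum.remove) auto
  moreover have "mq (0,0) = (1 :: 'k ser)" by (simp add: mq_def mon_Nil)
  ultimately have eq: "(\<Sum>q\<in>{..K} \<times> {..K}. mq q) - 1 = (\<Sum>q\<in>SK K. (mq q :: 'k ser))" by simp
  have "modF (Suc K) (gg - 1) ((\<Sum>q\<in>{..K} \<times> {..K}. mq q) - 1)"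
    by (rule modF_diff[OF gg_trunc modF_refl])
  then show ?thesis by (rule subst[OF eq, where P="\<lambda>x. modF (Suc K) (gg - 1) x"])
qed

definition LS :: "nat \<Rightarrow> nat \<Rightarrow> (nat \<times> nat) list set" where
  "LS K n = {ws. set ws \<subseteq> SK K \<and> length ws = n}"

definition LL :: "nat \<Rightarrow> (nat \<times> nat) list set" where
  "LL K = {ws. set ws \<subseteq> SK K \<and> length ws \<le> K}"

lemma finite_LS [simp]: "finite (LS K n)"
  unfolding LS_def by (rule finite_subset[OF _ finite_lists_length_le[OF finite_SK, of K n]]) auto

lemma finite_LL [simp]: "finite (LL K)"
  unfolding LL_def by (rule finite_lists_length_le[OF finite_SK])

definition pc :: "(nat \<times> nat) list \<Rightarrow> 'k::field_char_0" where
  "pc ws = (\<Prod>q\<leftarrow>ws. 1 / (fact (fst q) * fact (snd q)))"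

lemma ZZ_trunc: "modF (Suc K) ZZ (\<Sum>n\<le>K. \<Sum>ws\<in>LS K n. sc (fps_ln 1 $ n * pc ws) * (mon (dl ws, []) :: 'k::field_char_0 ser))"
proof -
  have m1: "modF (Suc K) ZZ (ptr (fps_ln 1) (gg - 1) K)"
    unfolding ZZ_def tlog_def by (rule sig_trunc[OF inF_gg])
  have m2: "modF (Suc K) (ptr (fps_ln 1) (gg - 1) K) (\<Sum>n\<le>K. sc (fps_ln 1 $ n) * (\<Sum>q\<in>SK K. mq q) ^ n)"
    unfolding ptr_def by (intro modF_sum modF_sc_mult modF_power gg1_trunc)
  have eq: "(\<Sum>n\<le>K. sc (fps_ln 1 $ n) * (\<Sum>q\<in>SK K. mq q) ^ n) =
      (\<Sum>n\<le>K. \<Sum>ws\<in>LS K n. sc (fps_ln 1 $ n * pc ws) * (mon (dl ws, []) :: 'k ser))"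
  proof (rule sum.cong[OF refl])
    fix n
    show "sc (fps_ln 1 $ n) * (\<Sum>q\<in>SK K. mq q) ^ n = (\<Sum>ws\<in>LS K n. sc (fps_ln 1 $ n * pc ws) * (mon (dl ws, []) :: 'k ser))"
      by (simp add: power_sum_lists LS_def prod_mq sum_distrib_left pc_def sc_mult mult.assoc)
  qed
  show ?thesis using modF_trans[OF m1 m2] by (rule subst[OF eq, where P="\<lambda>x. modF (Suc K) ZZ x"])
qed

lemma cf_mon_eq: "cf (mon p) q = (if p = q then 1 else 0)" by (auto simp: cf_mon)

lemma sum_LS_LL: "(\<Sum>n\<le>K. \<Sum>ws\<in>LS K n. G n ws) = (\<Sum>ws\<in>LL K. G (length ws) ws)"
proof -
  have "(\<Sum>n\<le>K. \<Sum>ws\<in>LS K n. G n ws) = (\<Sum>z\<in>Sigma {..K} (LS K). G (fst z) (snd z))"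
    by (subst sum.Sigma) (auto simp: split_def)
  also have "\<dots> = (\<Sum>ws\<in>LL K. G (length ws) ws)"
    by (rule sum.reindex_bij_witness[where i="\<lambda>ws. (length ws, ws)" and j="snd"])
       (auto simp: LS_def LL_def)
  finally show ?thesis .
qed

lemma length_le_sum_list: "(\<And>p. p \<in> set ws \<Longrightarrow> 1 \<le> f p) \<Longrightarrow> length ws \<le> (\<Sum>p\<leftarrow>ws. f p :: nat)"
  by (induction ws) (auto, fastforce)

lemma member_le_sum_list': "q \<in> set ws \<Longrightarrow> f q \<le> (\<Sum>p\<leftarrow>ws. f p :: nat)"
  by (induction ws) auto

lemma prod_list_inverse: "(\<Prod>q\<leftarrow>ws. 1 / (f q :: 'k::field)) = 1 / (\<Prod>q\<leftarrow>ws. f q)"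
  by (induction ws) simp_all

lemma ZZ_coeff: "cf (ZZ :: 'k::field_char_0 ser) (w,[]) = (\<Sum>ws\<in>{ws\<in>dynkin_words (length w). dl ws = w}. cZ ws)"
proof -
  define K where "K = length w"
  let ?G = "\<lambda>ws. if dl ws = w then fps_ln 1 $ length ws * pc ws else (0 :: 'k)"
  have "cf (ZZ - (\<Sum>n\<le>K. \<Sum>ws\<in>LS K n. sc (fps_ln 1 $ n * pc ws) * (mon (dl ws, []) :: 'k ser))) (w,[]) = 0"
    by (rule inF_cf[OF ZZ_trunc[of K, unfolded modF_def]]) (simp add: K_def sz_def)
  then have "cf ZZ (w,[]) = cf (\<Sum>n\<le>K. \<Sum>ws\<in>LS K n. sc (fps_ln 1 $ n * pc ws) * (mon (dl ws, []) :: 'k ser)) (w,[])"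
    by (simp only: cf_diff right_minus_eq)
  also have "\<dots> = (\<Sum>n\<le>K. \<Sum>ws\<in>LS K n. ?G ws)"
    unfolding cf_sum by (intro sum.cong refl) (simp add: cf_mon_eq LS_def)
  also have "\<dots> = (\<Sum>ws\<in>LL K. ?G ws)"
    by (rule sum_LS_LL)
  also have "\<dots> = (\<Sum>ws\<in>{ws\<in>dynkin_words (length w). dl ws = w}. cZ ws)"
  proof (rule sum.mono_neutral_cong_right)
    show "finite (LL K)" by simp
    show "{ws \<in> dynkin_words (length w). dl ws = w} \<subseteq> LL K"
    proof
      fix ws assume "ws \<in> {ws \<in> dynkin_words (length w). dl ws = w}"
      then have ws: "ws \<noteq> []" "\<And>p. p \<in> set ws \<Longrightarrow> 0 < fst p + snd p" "(\<Sum>p\<leftarrow>ws. fst p + snd p) = K"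
        by (auto simp: dynkin_words_def K_def)
      have "length ws \<le> K" using length_le_sum_list[of ws "\<lambda>p. fst p + snd p"] ws by fastforce
      moreover have "set ws \<subseteq> SK K"
      proof
        fix q assume q: "q \<in> set ws"
        have "fst q + snd q \<le> K" using member_le_sum_list'[OF q, of "\<lambda>p. fst p + snd p"] ws by simp
        then show "q \<in> SK K" using ws(2)[OF q] unfolding SK_def by (cases q) simp
      qed
      ultimately show "ws \<in> LL K" by (simp add: LL_def)
    qed
    show "\<forall>ws\<in>LL K - {ws \<in> dynkin_words (length w). dl ws = w}. ?G ws = 0"
    proof
      fix ws assume ws: "ws \<in> LL K - {ws \<in> dynkin_words (length w). dl ws = w}"
      show "?G ws = 0"
      proof (cases "dl ws = w \<and> ws \<noteq> []")
        case True
        have "\<And>p. p \<in> set ws \<Longrightarrow> 0 < fst p + snd p" using ws by (auto simp: LL_def SK_def)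
        moreover have "(\<Sum>p\<leftarrow>ws. fst p + snd p) = length w" using True by (simp flip: length_dl)
        ultimately have "ws \<in> dynkin_words (length w)" using True by (simp add: dynkin_words_def)
        then show ?thesis using ws True by blast
      next
        case False
        then show ?thesis by (cases "dl ws = w") simp_all
      qed
    qed
    fix ws assume "ws \<in> {ws \<in> dynkin_words (length w). dl ws = w}"
    then have "ws \<noteq> []" "dl ws = w" by (auto simp: dynkin_words_def)
    then show "?G ws = cZ ws"
      by (simp add: fps_ln_nth pc_def cZ_def prod_list_inverse)
  qed
  finally show ?thesis .
qed

section \<open>Filtered vector spaces\<close>

locale filt =
  fixes scale :: "'k::field_char_0 \<Rightarrow> 'a::ab_group_add \<Rightarrow> 'a" and F :: "nat \<Rightarrow> 'a set"
  assumes vs: "vector_space scale" and fil: "filtration scale F" and cpl: "complete_filtration F"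
begin

sublocale vector_space scale by (rule vs)

lemma F0 [simp]: "0 \<in> F n" using fil by (simp add: filtration_def)
lemma F_add: "x \<in> F n \<Longrightarrow> y \<in> F n \<Longrightarrow> x + y \<in> F n" using fil by (simp add: filtration_def)
lemma F_scale: "x \<in> F n \<Longrightarrow> scale c x \<in> F n" using fil by (simp add: filtration_def)
lemma F_uminus: "x \<in> F n \<Longrightarrow> - x \<in> F n"
  using F_scale[of x n "-1"] by simp
lemma F_uminus_iff [simp]: "- x \<in> F n \<longleftrightarrow> x \<in> F n"
  using F_uminus[of x n] F_uminus[of "- x" n] by auto
lemma F_diff: "x \<in> F n \<Longrightarrow> y \<in> F n \<Longrightarrow> x - y \<in> F n"
  using F_add[of x n "- y"] by simp
lemma F_UNIV [simp]: "x \<in> F 0" using fil by (simp add: filtration_def)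
lemma F_Suc: "x \<in> F (Suc n) \<Longrightarrow> x \<in> F n" using fil by (auto simp: filtration_def)
lemma F_mono: "m \<le> n \<Longrightarrow> x \<in> F n \<Longrightarrow> x \<in> F m"
  by (induction n rule: dec_induct) (auto dest: F_Suc)
lemma F_mono': "x \<in> F n \<Longrightarrow> m \<le> n \<Longrightarrow> x \<in> F m" by (rule F_mono)
lemma F_sum: "(\<And>i. i \<in> A \<Longrightarrow> f i \<in> F n) \<Longrightarrow> sum f A \<in> F n"
  by (induction A rule: infinite_finite_induct) (auto intro: F_add)
lemma F_diff_swap: "x - y \<in> F n \<Longrightarrow> y - x \<in> F n"
  using F_uminus[of "x - y" n] by simp
lemma F_diff_trans: "x - y \<in> F n \<Longrightarrow> y - z \<in> F n \<Longrightarrow> x - z \<in> F n"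
  using F_add[of "x - y" n "y - z"] by simp
lemma F_diff_add: "x - x' \<in> F n \<Longrightarrow> y - y' \<in> F n \<Longrightarrow> (x + y) - (x' + y') \<in> F n"
  using F_add[of "x - x'" n "y - y'"] by (simp add: algebra_simps)
lemma F_diff_diff: "x - x' \<in> F n \<Longrightarrow> y - y' \<in> F n \<Longrightarrow> (x - y) - (x' - y') \<in> F n"
  using F_diff[of "x - x'" n "y - y'"] by (simp add: algebra_simps)
lemma F_diff_scale: "x - x' \<in> F n \<Longrightarrow> scale c x - scale c x' \<in> F n"
  using F_scale[of "x - x'" n c] by (simp add: scale_right_diff_distrib)
lemma F_diff_sum: "(\<And>i. i \<in> A \<Longrightarrow> f i - g i \<in> F n) \<Longrightarrow> sum f A - sum g A \<in> F n"
  using F_sum[of A "\<lambda>i. f i - g i" n] by (simp add: sum_subtractf)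
lemma F_add_small: "y \<in> F n \<Longrightarrow> (x + y) - x \<in> F n" by simp

lemma hausdorff: "(\<And>n. x \<in> F n) \<Longrightarrow> x = 0"
proof -
  assume x: "\<And>n. x \<in> F n"
  have "\<exists>!a. \<forall>n. a - (\<lambda>n. 0) n \<in> F n"
    using cpl unfolding complete_filtration_def by (erule_tac x="\<lambda>n. 0" in allE) simp
  then show "x = 0" using x by (metis F0 diff_zero)
qed

lemma hausdorff_diff: "(\<And>n. x - y \<in> F n) \<Longrightarrow> x = y"
  using hausdorff[of "x - y"] by simp

lemma flim_eqI:
  assumes a: "\<And>n. a - s n \<in> F n"
  shows "flim F s = a"
proof -
  have conv: "fconv F s a"
    unfolding fconv_def
  proof
    fix k show "\<exists>N. \<forall>n\<ge>N. s n - a \<in> F k"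
      by (rule exI[of _ k]) (auto intro: F_mono[OF _ F_diff_swap[OF a]])
  qed
  have uniq: "L = a" if L: "fconv F s L" for L
  proof (rule hausdorff_diff[symmetric])
    fix k
    obtain N where N: "\<forall>n\<ge>N. s n - L \<in> F k" using L unfolding fconv_def by blast
    let ?n = "max N k"
    have "a - s ?n \<in> F k" by (rule F_mono[OF _ a]) simp
    moreover have "s ?n - L \<in> F k" using N by simp
    ultimately show "a - L \<in> F k" by (rule F_diff_trans)
  qed
  show ?thesis unfolding flim_def using conv uniq by (rule the_equality)
qed

lemma complete_ex:
  assumes "\<And>n. x (Suc n) - x n \<in> F n"
  shows "\<exists>a. \<forall>n. a - x n \<in> F n"
  using cpl assms unfolding complete_filtration_def by blast

lemma fsuminf_trunc:
  assumes f: "\<And>n. f n \<in> F n"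
  shows "fsuminf F f - (\<Sum>i<n. f i) \<in> F n"
proof -
  obtain a where a: "\<forall>n. a - (\<Sum>i<n. f i) \<in> F n"
    using complete_ex[of "\<lambda>n. \<Sum>i<n. f i"] f by auto
  have "fsuminf F f = a" unfolding fsuminf_def by (rule flim_eqI) (use a in auto)
  then show ?thesis using a by simp
qed

lemma fsuminf_in: "(\<And>n. f n \<in> F n) \<Longrightarrow> f 0 = 0 \<Longrightarrow> fsuminf F f \<in> F 1"
  using fsuminf_trunc[of f 1] by simp

end

locale cfa =
  fixes scale :: "'k::field_char_0 \<Rightarrow> 'a::ring \<Rightarrow> 'a" and F :: "nat \<Rightarrow> 'a set"
  assumes cfa: "cf_assoc_algebra scale F"
begin

sublocale filt scale F
  using cfa unfolding cf_assoc_algebra_def filt_def by blast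

lemma F_mult: "x \<in> F m \<Longrightarrow> y \<in> F n \<Longrightarrow> x * y \<in> F (m + n)"
  using cfa unfolding cf_assoc_algebra_def by blast
lemma F_mult_left: "x \<in> F n \<Longrightarrow> x * y \<in> F n"
  using F_mult[of x n y 0] by simp
lemma F_mult_right: "y \<in> F n \<Longrightarrow> x * y \<in> F n"
  using F_mult[of x 0 y n] by simp
lemma scale_mult_left: "scale c (x * y) = scale c x * y"
  using cfa unfolding cf_assoc_algebra_def by blast
lemma scale_mult_right: "scale c (x * y) = x * scale c y"
  using cfa unfolding cf_assoc_algebra_def by blast
lemma F_diff_mult: "x - x' \<in> F n \<Longrightarrow> y - y' \<in> F n \<Longrightarrow> x * y - x' * y' \<in> F n"
proof -
  assume a: "x - x' \<in> F n" "y - y' \<in> F n"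
  have "x * y - x' * y' = (x - x') * y + x' * (y - y')" by (simp add: algebra_simps)
  then show ?thesis using a by (simp add: F_add F_mult_left F_mult_right)
qed

lemma npow_in: "x \<in> F 1 \<Longrightarrow> npow x n \<in> F (Suc n)"
proof (induction n)
  case (Suc n)
  then show ?case using F_mult[of x 1 "npow x n" "Suc n"] by simp
qed simp

lemma npow_diff:
  assumes x: "x \<in> F 1" and y: "y \<in> F 1" and d: "x - y \<in> F m"
  shows "npow x n - npow y n \<in> F (m + n)"
proof (induction n)
  case 0 then show ?case using d by simp
next
  case (Suc n)
  have "npow x (Suc n) - npow y (Suc n) = x * (npow x n - npow y n) + (x - y) * npow y n"
    by (simp add: algebra_simps)
  moreover have "x * (npow x n - npow y n) \<in> F (m + Suc n)"
    using F_mult[OF x Suc] by simp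
  moreover have "(x - y) * npow y n \<in> F (m + Suc n)"
    using F_mult[OF d npow_in[OF y, of n]] by simp
  ultimately show ?case by (simp add: F_add)
qed

definition Eb :: "'a \<Rightarrow> 'a" where
  "Eb z = snd (uexp scale F z)"

lemma Eb_def': "Eb z = fsuminf F (\<lambda>n. scale (1 / fact (Suc n)) (npow z n))"
  by (simp add: Eb_def uexp_def)

lemma uexp_eq: "uexp scale F z = (1, Eb z)" by (simp add: Eb_def uexp_def)

lemma Eb_trunc:
  assumes z: "z \<in> F 1"
  shows "Eb z - (\<Sum>i<n. scale (1 / fact (Suc i)) (npow z i)) \<in> F n"
  unfolding Eb_def' by (rule fsuminf_trunc) (rule F_mono[OF _ F_scale[OF npow_in[OF z]]], simp)

lemma Eb_in: "z \<in> F 1 \<Longrightarrow> Eb z \<in> F 1"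
proof -
  assume z: "z \<in> F 1"
  have "Eb z - z \<in> F 1" using Eb_trunc[OF z, of 1] by simp
  from F_add[OF this z] show ?thesis by simp
qed

lemma Eb_cong:
  assumes x: "x \<in> F 1" and y: "y \<in> F 1" and d: "x - y \<in> F (Suc N)"
  shows "Eb x - Eb y \<in> F (Suc N)"
proof -
  have dd: "(\<Sum>i<Suc N. scale (1 / fact (Suc i)) (npow x i)) - (\<Sum>i<Suc N. scale (1 / fact (Suc i)) (npow y i)) \<in> F (Suc N)"
    by (intro F_diff_sum F_diff_scale F_mono[OF _ npow_diff[OF x y d]]) simp
  have "(Eb x - (\<Sum>i<Suc N. scale (1 / fact (Suc i)) (npow x i))) +
     ((\<Sum>i<Suc N. scale (1 / fact (Suc i)) (npow x i)) - (\<Sum>i<Suc N. scale (1 / fact (Suc i)) (npow y i))) -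
     (Eb y - (\<Sum>i<Suc N. scale (1 / fact (Suc i)) (npow y i))) \<in> F (Suc N)"
    by (rule F_diff[OF F_add[OF Eb_trunc[OF x] dd] Eb_trunc[OF y]])
  then show ?thesis by simp
qed

lemma Eb_inj:
  assumes x: "x \<in> F 1" and y: "y \<in> F 1" and e: "Eb x = Eb y"
  shows "x = y"
proof (rule hausdorff_diff)
  fix n show "x - y \<in> F n"
  proof (induction n)
    case 0 then show ?case by simp
  next
    case (Suc n)
    show ?case
    proof (cases n)
      case 0 then show ?thesis using x y by (simp add: F_diff)
    next
      case (Suc m)
      let ?t = "\<lambda>z i. scale (1 / fact (Suc i)) (npow z i)"
      have split: "(\<Sum>i<Suc n. g i) = g 0 + (\<Sum>i\<in>{1..<Suc n}. g i)" for g :: "nat \<Rightarrow> 'a"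
        by (simp add: atLeast0LessThan[symmetric] sum.atLeast_Suc_lessThan)
      have A: "(Eb y - (\<Sum>i<Suc n. ?t y i)) - (Eb x - (\<Sum>i<Suc n. ?t x i)) \<in> F (Suc n)"
        by (rule F_diff[OF Eb_trunc[OF y] Eb_trunc[OF x]])
      have eqq: "(Eb y - (\<Sum>i<Suc n. ?t y i)) - (Eb x - (\<Sum>i<Suc n. ?t x i)) =
            (\<Sum>i<Suc n. ?t x i) - (\<Sum>i<Suc n. ?t y i)" using e by (simp only: diff_diff_eq2 diff_add_eq) (simp add: algebra_simps)
      have S: "(\<Sum>i<Suc n. ?t x i) - (\<Sum>i<Suc n. ?t y i) \<in> F (Suc n)" using A[unfolded eqq] .
      have "(\<Sum>i<Suc n. ?t x i) - (\<Sum>i<Suc n. ?t y i) =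
          (x - y) + (\<Sum>i\<in>{1..<Suc n}. ?t x i - ?t y i)"
        by (simp only: split sum_subtractf) simp
      moreover have R: "(\<Sum>i\<in>{1..<Suc n}. ?t x i - ?t y i) \<in> F (Suc n)"
      proof (rule F_sum)
        fix i assume i: "i \<in> {1..<Suc n}"
        have "npow x i - npow y i \<in> F (n + i)" by (rule npow_diff[OF x y Suc.IH])
        then have "npow x i - npow y i \<in> F (Suc n)" by (rule F_mono[rotated]) (use i in auto)
        then show "?t x i - ?t y i \<in> F (Suc n)" by (rule F_diff_scale)
      qed
      ultimately have "(x - y) + (\<Sum>i\<in>{1..<Suc n}. ?t x i - ?t y i) - (\<Sum>i\<in>{1..<Suc n}. ?t x i - ?t y i) \<in> F (Suc n)"
        using S by (intro F_diff) simp_all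
      then show ?thesis by simp
    qed
  qed
qed

end

definition lt :: "'a \<Rightarrow> 'a \<Rightarrow> bool \<Rightarrow> 'a" where
  "lt u v a = (if a then v else u)"

fun wB :: "'a::ring \<Rightarrow> 'a \<Rightarrow> bool list \<Rightarrow> 'a" where
  "wB u v [] = 0"
| "wB u v [a] = lt u v a"
| "wB u v (a # b # w) = lt u v a * wB u v (b # w)"

lemma wB_Cons: "w \<noteq> [] \<Longrightarrow> wB u v (a # w) = lt u v a * wB u v w"
  by (cases w) auto

lemma wB_append: "w1 \<noteq> [] \<Longrightarrow> w2 \<noteq> [] \<Longrightarrow> wB u v (w1 @ w2) = wB u v w1 * wB u v w2"
proof (induction w1)
  case Nil then show ?case by simp
next
  case (Cons a w1)
  show ?case
  proof (cases "w1 = []")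
    case True then show ?thesis using Cons by (simp add: wB_Cons)
  next
    case False then show ?thesis using Cons by (simp add: wB_Cons mult.assoc)
  qed
qed

definition W1 :: "nat \<Rightarrow> bool list set" where
  "W1 N = {w. 1 \<le> length w \<and> length w \<le> N}"

lemma finite_W1 [simp]: "finite (W1 N)"
  unfolding W1_def by (rule finite_subset[OF _ finite_words_le[of N]]) auto

context cfa
begin

lemma lt_in: "u \<in> F 1 \<Longrightarrow> v \<in> F 1 \<Longrightarrow> lt u v a \<in> F 1"
  by (simp add: lt_def)

lemma wB_in: assumes u: "u \<in> F 1" and v: "v \<in> F 1" shows "wB u v w \<in> F (length w)"
proof (induction w)
  case (Cons a w)
  show ?case
  proof (cases "w = []")
    case True then show ?thesis using lt_in[OF u v] by simp
  next
    case False
    then have "lt u v a * wB u v w \<in> F (1 + length w)"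
      by (intro F_mult lt_in[OF u v] Cons)
    then show ?thesis using False by (simp add: wB_Cons)
  qed
qed simp

definition evB :: "'a \<Rightarrow> 'a \<Rightarrow> nat \<Rightarrow> 'k ser \<Rightarrow> 'a" where
  "evB u v N f = (\<Sum>w\<in>W1 N. scale (cf f (w,[])) (wB u v w))"

lemma evB_add: "evB u v N (f + g) = evB u v N f + evB u v N g"
  by (simp add: evB_def scale_left_distrib sum.distrib)
lemma evB_diff: "evB u v N (f - g) = evB u v N f - evB u v N g"
  by (simp add: evB_def scale_left_diff_distrib sum_subtractf)
lemma evB_0 [simp]: "evB u v N 0 = 0"
  by (simp add: evB_def)
lemma evB_sc: "evB u v N (sc c * f) = scale c (evB u v N f)"
  by (simp add: evB_def scale_sum_right)
lemma evB_sum: "evB u v N (sum f A) = (\<Sum>i\<in>A. evB u v N (f i))"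
  by (induction A rule: infinite_finite_induct) (auto simp: evB_add)

lemma evB_cong: "modF (Suc N) f g \<Longrightarrow> evB u v N f = evB u v N g"
  unfolding evB_def
proof (rule sum.cong[OF refl])
  fix w assume "modF (Suc N) f g" "w \<in> W1 N"
  then have "cf (f - g) (w,[]) = 0" unfolding modF_def by (intro inF_cf) (auto simp: W1_def sz_def)
  then show "scale (cf f (w, [])) (wB u v w) = scale (cf g (w, [])) (wB u v w)" by simp
qed

lemma evB_in:
  assumes "inF m f" "u \<in> F 1" "v \<in> F 1"
  shows "evB u v N f \<in> F m"
  unfolding evB_def
proof (rule F_sum)
  fix w assume "w \<in> W1 N"
  show "scale (cf f (w, [])) (wB u v w) \<in> F m"
  proof (cases "length w < m")
    case True
    then have "cf f (w,[]) = 0" using assms(1) by (intro inF_cf) (auto simp: sz_def)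
    then show ?thesis by simp
  next
    case False
    then show ?thesis using wB_in[OF assms(2,3), of w] by (intro F_scale F_mono[of m "length w"]) auto
  qed
qed

lemma evB_X1: "1 \<le> N \<Longrightarrow> evB u v N (X1 a) = lt u v a"
proof -
  assume N: "1 \<le> N"
  have "evB u v N (X1 a) = (\<Sum>w\<in>W1 N. if w = [a] then wB u v w else 0)"
    unfolding evB_def by (rule sum.cong) (auto simp: X1_def cf_mon)
  also have "\<dots> = wB u v [a]" using N by (subst sum.delta) (auto simp: W1_def)
  finally show ?thesis by simp
qed


lemma scale_mult_scale: "scale a x * scale b y = scale (a * b) (x * y)"
  by (simp add: scale_mult_left[symmetric] scale_mult_right[symmetric])

lemma evB_mult:
  assumes u: "u \<in> F 1" and v: "v \<in> F 1" and f: "inF 1 f" and g: "inF 1 g"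
  shows "evB u v N (f * g) - evB u v N f * evB u v N g \<in> F (Suc N)"
proof -
  define G where "G q = scale (cf f (fst q,[]) * cf g (snd q,[])) (wB u v (fst q) * wB u v (snd q))" for q
  define H where "H z = scale (cf f (take (snd z) (fst z), []) * cf g (drop (snd z) (fst z), [])) (wB u v (fst z))" for z
  define P where "P = {q \<in> W1 N \<times> W1 N. length (fst q) + length (snd q) \<le> N}"
  define Q where "Q = {q \<in> W1 N \<times> W1 N. \<not> length (fst q) + length (snd q) \<le> N}"
  have finWW: "finite (W1 N \<times> W1 N)" by simp
  have prod: "evB u v N f * evB u v N g = (\<Sum>q\<in>W1 N \<times> W1 N. G q)"
    unfolding evB_def sum_product sum.cartesian_product G_def
    by (simp add: scale_mult_scale split_def)
  have "(\<Sum>q\<in>W1 N \<times> W1 N. G q) = (\<Sum>q\<in>P \<union> Q. G q)"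
    by (rule sum.cong) (auto simp: P_def Q_def)
  also have "\<dots> = (\<Sum>q\<in>P. G q) + (\<Sum>q\<in>Q. G q)"
    by (rule sum.union_disjoint) (auto simp: P_def Q_def intro: finite_subset[OF _ finWW])
  finally have split: "(\<Sum>q\<in>W1 N \<times> W1 N. G q) = (\<Sum>q\<in>P. G q) + (\<Sum>q\<in>Q. G q)" .
  have Qin: "(\<Sum>q\<in>Q. G q) \<in> F (Suc N)"
  proof (rule F_sum)
    fix q assume q: "q \<in> Q"
    have "wB u v (fst q) * wB u v (snd q) \<in> F (length (fst q) + length (snd q))"
      by (intro F_mult wB_in u v)
    then show "G q \<in> F (Suc N)" unfolding G_def
      by (intro F_scale F_mono[of "Suc N" "length (fst q) + length (snd q)"]) (use q in \<open>auto simp: Q_def\<close>)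
  qed
  have sz0: "sz ([]::bool list, []::bool list) < 1" by (simp add: sz_def)
  have f0: "cf f ([],[]) = 0" by (rule inF_cf[OF f sz0])
  have g0: "cf g ([],[]) = 0" by (rule inF_cf[OF g sz0])
  have "evB u v N (f * g) = (\<Sum>w\<in>W1 N. \<Sum>i\<le>length w. H (w, i))"
    unfolding evB_def cf_mult_NilR H_def by (simp add: scale_sum_left)
  also have "\<dots> = (\<Sum>z\<in>Sigma (W1 N) (\<lambda>w. {..length w}). H z)"
    by (subst sum.Sigma) auto
  also have "\<dots> = (\<Sum>z\<in>Sigma (W1 N) (\<lambda>w. {1..<length w}). H z)"
  proof (rule sum.mono_neutral_right)
    show "finite (Sigma (W1 N) (\<lambda>w. {..length w}))" by simp
    show "Sigma (W1 N) (\<lambda>w. {1..<length w}) \<subseteq> Sigma (W1 N) (\<lambda>w. {..length w})" by auto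
    show "\<forall>z\<in>Sigma (W1 N) (\<lambda>w. {..length w}) - Sigma (W1 N) (\<lambda>w. {1..<length w}). H z = 0"
    proof
      fix z assume z: "z \<in> Sigma (W1 N) (\<lambda>w. {..length w}) - Sigma (W1 N) (\<lambda>w. {1..<length w})"
      then have "snd z = 0 \<or> snd z = length (fst z)" by (cases z) auto
      then show "H z = 0"
      proof
        assume "snd z = 0" then show ?thesis by (simp add: H_def f0)
      next
        assume "snd z = length (fst z)" then show ?thesis by (simp add: H_def g0)
      qed
    qed
  qed
  also have "\<dots> = (\<Sum>q\<in>P. G q)"
  proof (rule sum.reindex_bij_witness[where i="\<lambda>q. (fst q @ snd q, length (fst q))"
                                        and j="\<lambda>z. (take (snd z) (fst z), drop (snd z) (fst z))"])
    fix z assume z: "z \<in> Sigma (W1 N) (\<lambda>w. {1..<length w})"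
    then have ne: "take (snd z) (fst z) \<noteq> []" "drop (snd z) (fst z) \<noteq> []" by (cases z, auto)+
    have "wB u v (fst z) = wB u v (take (snd z) (fst z)) * wB u v (drop (snd z) (fst z))"
      using wB_append[OF ne, of u v] by simp
    then show "G (take (snd z) (fst z), drop (snd z) (fst z)) = H z" by (simp add: G_def H_def)
  qed (auto simp: P_def W1_def)
  finally have lhs: "evB u v N (f * g) = (\<Sum>q\<in>P. G q)" .
  show ?thesis unfolding lhs prod split using F_uminus[OF Qin] by simp
qed

lemma evB_power:
  assumes u: "u \<in> F 1" and v: "v \<in> F 1" and f: "inF 1 f"
  shows "evB u v N (f ^ Suc n) - npow (evB u v N f) n \<in> F (Suc N)"
proof (induction n)
  case 0 then show ?case by simp
next
  case (Suc n)
  have "evB u v N (f * f ^ Suc n) - evB u v N f * evB u v N (f ^ Suc n) \<in> F (Suc N)"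
    by (rule evB_mult[OF u v f inF_power_ge[OF f]]) simp
  moreover have "evB u v N f * evB u v N (f ^ Suc n) - evB u v N f * npow (evB u v N f) n \<in> F (Suc N)"
    by (rule F_diff_mult[OF _ Suc]) simp
  ultimately have "evB u v N (f * f ^ Suc n) - evB u v N f * npow (evB u v N f) n \<in> F (Suc N)"
    by (rule F_diff_trans)
  then show ?case by simp
qed

lemma Eb_evB:
  assumes u: "u \<in> F 1" and v: "v \<in> F 1" and f: "inF 1 f"
  shows "Eb (evB u v N f) - evB u v N (texp f - 1) \<in> F (Suc N)"
proof -
  let ?z = "evB u v N f"
  have z: "?z \<in> F 1" by (rule evB_in[OF f u v])
  have t1: "Eb ?z - (\<Sum>i<Suc N. scale (1 / fact (Suc i)) (npow ?z i)) \<in> F (Suc N)"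
    by (rule Eb_trunc[OF z])
  have "(\<Sum>i<Suc N. scale (1 / fact (Suc i)) (npow ?z i)) =
        (\<Sum>i<N. scale (1 / fact (Suc i)) (npow ?z i)) + scale (1 / fact (Suc N)) (npow ?z N)"
    by simp
  moreover have "scale (1 / fact (Suc N)) (npow ?z N) \<in> F (Suc N)"
    by (intro F_scale npow_in z)
  ultimately have t2: "(\<Sum>i<Suc N. scale (1 / fact (Suc i)) (npow ?z i)) - (\<Sum>i<N. scale (1 / fact (Suc i)) (npow ?z i)) \<in> F (Suc N)"
    by simp
  have tt: "modF (Suc N) (texp f) (\<Sum>i<Suc N. sc (1 / fact i) * f ^ i)"
    using texp_trunc[OF f, of N] by (simp add: lessThan_Suc_atMost)
  have "(\<Sum>i<Suc N. sc (1 / fact i) * f ^ i) = 1 + (\<Sum>i<N. sc (1 / fact (Suc i)) * f ^ Suc i)"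
    by (simp only: sum.lessThan_Suc_shift) simp
  then have tt': "modF (Suc N) (texp f - 1) (\<Sum>i<N. sc (1 / fact (Suc i)) * f ^ Suc i)"
    using modF_diff[OF tt modF_refl[of "Suc N" 1]] by simp
  have "evB u v N (texp f - 1) = (\<Sum>i<N. scale (1 / fact (Suc i)) (evB u v N (f ^ Suc i)))"
    by (simp add: evB_cong[OF tt'] evB_sum evB_sc)
  moreover have "(\<Sum>i<N. scale (1 / fact (Suc i)) (evB u v N (f ^ Suc i))) -
                 (\<Sum>i<N. scale (1 / fact (Suc i)) (npow ?z i)) \<in> F (Suc N)"
    by (intro F_diff_sum F_diff_scale evB_power[OF u v f])
  ultimately have t3: "evB u v N (texp f - 1) - (\<Sum>i<N. scale (1 / fact (Suc i)) (npow ?z i)) \<in> F (Suc N)"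
    by simp
  show ?thesis using F_diff_trans[OF F_diff_trans[OF t1 t2] F_diff_swap[OF t3]] .
qed

lemma evB_hom:
  assumes h: "hom M f" and M: "1 \<le> M" "M \<le> N"
  shows "evB u v N f = (\<Sum>w\<in>{w. length w = M}. scale (cf f (w,[])) (wB u v w))"
  unfolding evB_def
proof (rule sum.mono_neutral_right)
  show "finite (W1 N)" by simp
  show "{w. length w = M} \<subseteq> W1 N" using M by (auto simp: W1_def)
  show "\<forall>w\<in>W1 N - {w. length w = M}. scale (cf f (w, [])) (wB u v w) = 0"
    using hom_cf[OF h] by (auto simp: sz_def)
qed

definition rnB :: "'a \<Rightarrow> 'a \<Rightarrow> bool list \<Rightarrow> 'a" where
  "rnB u v w = rnest (\<lambda>x y. x * y - y * x) (map (lt u v) w)"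

lemma rnB_simps: "rnB u v [a] = lt u v a" "rnB u v (a # b # w) = lt u v a * rnB u v (b # w) - rnB u v (b # w) * lt u v a"
  by (simp_all add: rnB_def)

lemma hom_X1: "hom 1 (X1 a)" by (auto simp: hom_def X1_def cf_mon sz_def)

lemma hom_rn: "w \<noteq> [] \<Longrightarrow> hom (length w) (rn w :: 'k ser)"
proof (induction w rule: induct_list012)
  case (2 a) then show ?case using hom_X1[of a] by simp
next
  case (3 a b w)
  have h: "hom (length (b # w)) (rn (b # w) :: 'k ser)" using 3 by simp
  have h2: "hom (1 + length (b # w)) (rn (b # w) * X1 a :: 'k ser)"
    using hom_mult[OF h hom_X1] by (simp add: add.commute)
  show ?case using hom_diff[OF hom_mult[OF hom_X1 h] h2] by simp
qed simp

lemma inF_rn: "w \<noteq> [] \<Longrightarrow> inF 1 (rn w :: 'k ser)"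
  using hom_inF[OF hom_rn] inF_mono by (metis Suc_leI length_greater_0_conv One_nat_def)

lemma evB_rn:
  assumes u: "u \<in> F 1" and v: "v \<in> F 1"
  shows "w \<noteq> [] \<Longrightarrow> length w \<le> N \<Longrightarrow> evB u v N (rn w) - rnB u v w \<in> F (Suc N)"
proof (induction w rule: induct_list012)
  case (2 a) then show ?case by (simp add: rnB_simps evB_X1)
next
  case (3 a b w)
  let ?R = "rn (b # w) :: 'k ser"
  have N: "1 \<le> N" using 3 by simp
  have IH: "evB u v N ?R - rnB u v (b # w) \<in> F (Suc N)" using 3 by simp
  have R1: "inF 1 ?R" by (rule inF_rn) simp
  have e1: "evB u v N (X1 a * ?R) - lt u v a * evB u v N ?R \<in> F (Suc N)"
    using evB_mult[OF u v inF_X1 R1, of N] by (simp add: evB_X1[OF N])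
  have e2: "evB u v N (?R * X1 a) - evB u v N ?R * lt u v a \<in> F (Suc N)"
    using evB_mult[OF u v R1 inF_X1, of N] by (simp add: evB_X1[OF N])
  have e3: "lt u v a * evB u v N ?R - evB u v N ?R * lt u v a -
            (lt u v a * rnB u v (b # w) - rnB u v (b # w) * lt u v a) \<in> F (Suc N)"
    by (intro F_diff_diff F_diff_mult IH) simp_all
  have "evB u v N (rn (a # b # w)) = evB u v N (X1 a * ?R) - evB u v N (?R * X1 a)"
    by (simp add: evB_diff)
  then show ?case using F_diff_trans[OF F_diff_diff[OF e1 e2] e3] by (simp add: rnB_simps)
qed simp

end

locale fbr = filt scale F
  for scale :: "'k::field_char_0 \<Rightarrow> 'a::ab_group_add \<Rightarrow> 'a" and F :: "nat \<Rightarrow> 'a set" +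
  fixes br :: "'a \<Rightarrow> 'a \<Rightarrow> 'a"
  assumes br_add1: "br (x + y) z = br x z + br y z"
    and br_add2: "br x (y + z) = br x y + br x z"
    and br_F: "x \<in> F m \<Longrightarrow> y \<in> F n \<Longrightarrow> br x y \<in> F (m + n)"
begin

lemma br_diff1: "br (x - y) z = br x z - br y z"
  using br_add1[of "x - y" y z] by (simp add: algebra_simps)
lemma br_diff2: "br x (y - z) = br x y - br x z"
  using br_add2[of x "y - z" z] by (simp add: algebra_simps)

lemma rnest_in: "zs \<noteq> [] \<Longrightarrow> (\<And>z. z \<in> set zs \<Longrightarrow> z \<in> F 1) \<Longrightarrow> rnest br zs \<in> F (length zs)"
proof (induction zs rule: induct_list012)
  case (3 a b zs)
  have "br a (rnest br (b # zs)) \<in> F (1 + length (b # zs))"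
    by (rule br_F) (use 3 in auto)
  then show ?case by simp
qed auto

lemma rnest_diff:
  assumes k: "1 \<le> k"
  shows "list_all2 (\<lambda>z z'. z - z' \<in> F k \<and> z \<in> F 1 \<and> z' \<in> F 1) zs zs' \<Longrightarrow> zs \<noteq> [] \<Longrightarrow>
         rnest br zs - rnest br zs' \<in> F (k + length zs - 1)"
proof (induction zs arbitrary: zs' rule: induct_list012)
  case 1 then show ?case by simp
next
  case (2 a)
  obtain a' where zs': "zs' = [a']" and d: "a - a' \<in> F k"
    using "2.prems"(1) unfolding list_all2_Cons1 list_all2_Nil by blast
  show ?case using d by (simp add: zs')
next
  case (3 a b zs)
  obtain a' b' zs'' where zs': "zs' = a' # b' # zs''" and aa: "a - a' \<in> F k" "a \<in> F 1" "a' \<in> F 1"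
    and rest: "list_all2 (\<lambda>z z'. z - z' \<in> F k \<and> z \<in> F 1 \<and> z' \<in> F 1) (b # zs) (b' # zs'')"
    using "3.prems"(1) unfolding list_all2_Cons1 by blast
  have IH: "rnest br (b # zs) - rnest br (b' # zs'') \<in> F (k + length (b # zs) - 1)"
    by (rule "3.IH"(2)[OF rest]) simp
  have inF1: "z \<in> F 1" if z: "z \<in> set (b # zs)" for z
  proof -
    obtain i where i: "i < length (b # zs)" "(b # zs) ! i = z" using z unfolding in_set_conv_nth by blast
    then show ?thesis using rest unfolding list_all2_conv_all_nth by blast
  qed
  have R: "rnest br (b # zs) \<in> F (length (b # zs))"
    by (rule rnest_in) (simp, rule inF1)
  have "br a (rnest br (b # zs)) - br a' (rnest br (b' # zs'')) =
        br (a - a') (rnest br (b # zs)) + br a' (rnest br (b # zs) - rnest br (b' # zs''))"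
    by (simp add: br_diff1 br_diff2)
  moreover have "br (a - a') (rnest br (b # zs)) \<in> F (k + length (a # b # zs) - 1)"
    using br_F[OF aa(1) R] by simp
  moreover have "br a' (rnest br (b # zs) - rnest br (b' # zs'')) \<in> F (k + length (a # b # zs) - 1)"
  proof -
    have "br a' (rnest br (b # zs) - rnest br (b' # zs'')) \<in> F (1 + (k + length (b # zs) - 1))"
      by (rule br_F[OF aa(3) IH])
    then show ?thesis using k by simp
  qed
  ultimately show ?case by (simp add: zs' F_add)
qed

lemma length_dynkin_letters: "length (dynkin_letters x y ws) = (\<Sum>p\<leftarrow>ws. fst p + snd p)"
  by (induction ws) (simp_all add: dynkin_letters_def)

lemma set_dynkin_letters: "set (dynkin_letters x y ws) \<subseteq> {x, y}"
  by (induction ws) (auto simp: dynkin_letters_def)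

lemma dynkin_words_N: "ws \<in> dynkin_words N \<Longrightarrow> 1 \<le> N"
proof -
  assume ws: "ws \<in> dynkin_words N"
  then obtain p ps where "ws = p # ps" "0 < fst p + snd p" by (cases ws) (auto simp: dynkin_words_def)
  then show "1 \<le> N" using ws by (auto simp: dynkin_words_def)
qed

lemma dynkin_term_in:
  assumes x: "x \<in> F 1" and y: "y \<in> F 1"
  shows "dynkin_term scale br x y N \<in> F N"
  unfolding dynkin_term_def
proof (rule F_sum)
  fix ws assume ws: "ws \<in> dynkin_words N"
  have len: "length (dynkin_letters x y ws) = N"
    using ws by (simp add: length_dynkin_letters dynkin_words_def)
  have "dynkin_letters x y ws \<noteq> []"
    using dynkin_words_N[OF ws] len by auto
  then have "rnest br (dynkin_letters x y ws) \<in> F (length (dynkin_letters x y ws))"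
    by (rule rnest_in) (use set_dynkin_letters[of x y ws] x y in auto)
  then show "scale (dynkin_coeff N ws) (rnest br (dynkin_letters x y ws)) \<in> F N"
    using ws by (simp add: F_scale length_dynkin_letters dynkin_words_def)
qed

lemma letters_all2:
  assumes "x - x' \<in> F k" "y - y' \<in> F k" "x \<in> F 1" "y \<in> F 1" "x' \<in> F 1" "y' \<in> F 1"
  shows "list_all2 (\<lambda>z z'. z - z' \<in> F k \<and> z \<in> F 1 \<and> z' \<in> F 1) (dynkin_letters x y ws) (dynkin_letters x' y' ws)"
proof (induction ws)
  case Nil then show ?case by (simp add: dynkin_letters_def)
next
  case (Cons p ws)
  have r: "list_all2 (\<lambda>z z'. z - z' \<in> F k \<and> z \<in> F 1 \<and> z' \<in> F 1) (replicate n a) (replicate n a')"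
    if "a - a' \<in> F k" "a \<in> F 1" "a' \<in> F 1" for n a a'
    using that by (induction n) auto
  show ?case using Cons r[OF assms(1,3,5)] r[OF assms(2,4,6)]
    by (simp add: dynkin_letters_def list_all2_appendI)
qed

lemma dynkin_term_diff:
  assumes k: "1 \<le> k" and N: "1 \<le> N"
    and d: "x - x' \<in> F k" "y - y' \<in> F k" and xy: "x \<in> F 1" "y \<in> F 1" "x' \<in> F 1" "y' \<in> F 1"
  shows "dynkin_term scale br x y N - dynkin_term scale br x' y' N \<in> F (k + N - 1)"
  unfolding dynkin_term_def
proof (rule F_diff_sum, rule F_diff_scale)
  fix ws assume ws: "ws \<in> dynkin_words N"
  have len: "length (dynkin_letters x y ws) = N"
    using ws by (simp add: length_dynkin_letters dynkin_words_def)
  have ne: "dynkin_letters x y ws \<noteq> []"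
    using N len by auto
  have "rnest br (dynkin_letters x y ws) - rnest br (dynkin_letters x' y' ws) \<in> F (k + length (dynkin_letters x y ws) - 1)"
    by (rule rnest_diff[OF k letters_all2[OF d xy] ne])
  then show "rnest br (dynkin_letters x y ws) - rnest br (dynkin_letters x' y' ws) \<in> F (k + N - 1)"
    using ws by (simp add: length_dynkin_letters dynkin_words_def)
qed

lemma dynkin_words_0: "dynkin_words 0 = {}"
  using dynkin_words_N by fastforce

lemma dynkin_term_0 [simp]: "dynkin_term scale br x y 0 = 0"
  by (simp add: dynkin_term_def dynkin_words_0)

lemma dynkin_words_1: "dynkin_words 1 = {[(1,0)], [(0,1)]}"
proof (rule set_eqI, rule iffI)
  fix ws assume ws: "ws \<in> dynkin_words 1"
  then obtain p ps where wsp: "ws = p # ps" by (cases ws) (auto simp: dynkin_words_def)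
  have pos: "\<forall>q\<in>set ws. 0 < fst q + snd q" and s: "(\<Sum>q\<leftarrow>ws. fst q + snd q) = 1"
    using ws by (auto simp: dynkin_words_def)
  have pp: "0 < fst p + snd p" using pos wsp by auto
  have ss: "fst p + snd p + (\<Sum>q\<leftarrow>ps. fst q + snd q) = 1" using s wsp by simp
  have p1: "fst p + snd p = 1" using pp ss by linarith
  have ps0: "(\<Sum>q\<leftarrow>ps. fst q + snd q) = 0" using pp ss by linarith
  have "ps = []"
  proof (rule ccontr)
    assume "ps \<noteq> []"
    then obtain q qs where "ps = q # qs" by (cases ps) auto
    then have "0 < fst q + snd q" using pos wsp by simp
    then show False using ps0 \<open>ps = q # qs\<close> by simp
  qed
  moreover have "p = (1,0) \<or> p = (0,1)" using p1 by (cases p) auto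
  ultimately show "ws \<in> {[(1,0)], [(0,1)]}" using wsp by auto
qed (auto simp: dynkin_words_def)

lemma dynkin_term_1: "dynkin_term scale br x y 1 = x + y"
  unfolding dynkin_term_def dynkin_words_1 by (simp add: dynkin_coeff_def dynkin_letters_def)

definition lC :: "'a \<Rightarrow> 'a \<Rightarrow> 'a" where
  "lC x y = lie_C scale br F x y"

lemma lC_trunc:
  assumes x: "x \<in> F 1" and y: "y \<in> F 1"
  shows "lC x y - (\<Sum>i<n. dynkin_term scale br x y i) \<in> F n"
  unfolding lC_def lie_C_def by (rule fsuminf_trunc) (rule dynkin_term_in[OF x y])

lemma lC_in: "x \<in> F 1 \<Longrightarrow> y \<in> F 1 \<Longrightarrow> lC x y \<in> F 1"
  using lC_trunc[of x y 1] by simp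

definition bch :: "'a \<Rightarrow> 'a \<Rightarrow> 'a" where
  "bch x y = lC x y - x - y"

lemma bch_trunc:
  assumes x: "x \<in> F 1" and y: "y \<in> F 1"
  shows "bch x y - (\<Sum>i\<in>{2..<Suc (Suc n)}. dynkin_term scale br x y i) \<in> F (Suc (Suc n))"
proof -
  let ?D = "dynkin_term scale br x y"
  have "(\<Sum>i<Suc (Suc n). ?D i) = (\<Sum>i\<in>{0..<Suc (Suc n)}. ?D i)" by (simp add: atLeast0LessThan)
  also have "\<dots> = ?D 0 + (\<Sum>i\<in>{Suc 0..<Suc (Suc n)}. ?D i)" by (rule sum.atLeast_Suc_lessThan) simp
  also have "(\<Sum>i\<in>{Suc 0..<Suc (Suc n)}. ?D i) = ?D 1 + (\<Sum>i\<in>{Suc (Suc 0)..<Suc (Suc n)}. ?D i)"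
    by (subst sum.atLeast_Suc_lessThan) simp_all
  finally have e: "(\<Sum>i<Suc (Suc n). ?D i) = x + y + (\<Sum>i\<in>{2..<Suc (Suc n)}. ?D i)"
    using dynkin_term_1 by (simp only: dynkin_term_0 One_nat_def numeral_2_eq_2 add_0_left add.assoc)
  have "lC x y - (\<Sum>i<Suc (Suc n). ?D i) \<in> F (Suc (Suc n))" by (rule lC_trunc[OF x y])
  then show ?thesis unfolding e bch_def by (simp add: algebra_simps)
qed

lemma bch_in: "x \<in> F 1 \<Longrightarrow> y \<in> F 1 \<Longrightarrow> bch x y \<in> F 2"
  using bch_trunc[of x y 0] by (simp add: numeral_2_eq_2)

lemma bch_diff:
  assumes k: "1 \<le> k" and d: "x - x' \<in> F k" "y - y' \<in> F k"
    and xy: "x \<in> F 1" "y \<in> F 1" "x' \<in> F 1" "y' \<in> F 1"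
  shows "bch x y - bch x' y' \<in> F (Suc k)"
proof -
  obtain n where n: "k = Suc n" using k by (cases k) auto
  let ?S = "\<lambda>x y. (\<Sum>i\<in>{2..<Suc (Suc n)}. dynkin_term scale br x y i)"
  have "?S x y - ?S x' y' \<in> F (Suc k)"
  proof (rule F_diff_sum)
    fix i assume i: "i \<in> {2..<Suc (Suc n)}"
    have "dynkin_term scale br x y i - dynkin_term scale br x' y' i \<in> F (k + i - 1)"
      by (rule dynkin_term_diff[OF k _ d xy]) (use i in auto)
    then show "dynkin_term scale br x y i - dynkin_term scale br x' y' i \<in> F (Suc k)"
      by (rule F_mono[rotated]) (use i in auto)
  qed
  moreover have "bch x y - ?S x y \<in> F (Suc k)" using bch_trunc[OF xy(1,2), of n] n by simp
  moreover have "bch x' y' - ?S x' y' \<in> F (Suc k)" using bch_trunc[OF xy(3,4), of n] n by simp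
  ultimately have "(bch x y - ?S x y) + (?S x y - ?S x' y') - (bch x' y' - ?S x' y') \<in> F (Suc k)"
    by (metis F_add F_diff)
  then show ?thesis by simp
qed

section \<open>BCH recursion\<close>

context
  fixes P :: "'a \<Rightarrow> 'a"
  assumes P_diff: "\<And>x y. P (x - y) = P x - P y"
    and P_F: "\<And>n x. x \<in> F n \<Longrightarrow> P x \<in> F n"
begin

definition Phi_it :: "'a \<Rightarrow> 'a \<Rightarrow> 'a" where
  "Phi_it a c = a - (lC (P c) (c - P c) - P c - (c - P c))"

lemma Phi_it_bch: "Phi_it a c = a - bch (P c) (c - P c)"
  by (simp add: Phi_it_def bch_def)

lemma Phi_it_in: "a \<in> F 1 \<Longrightarrow> c \<in> F 1 \<Longrightarrow> Phi_it a c \<in> F 1"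
  unfolding Phi_it_bch
  by (intro F_diff F_mono[OF _ bch_in] P_F) (simp_all add: F_diff P_F)

lemma Phi_it_diff:
  assumes k: "1 \<le> k" and c: "c \<in> F 1" "c' \<in> F 1" and d: "c - c' \<in> F k"
  shows "Phi_it a c - Phi_it a c' \<in> F (Suc k)"
proof -
  have "bch (P c') (c' - P c') - bch (P c) (c - P c) \<in> F (Suc k)"
  proof (rule bch_diff[OF k])
    show "P c' - P c \<in> F k" using P_F[OF F_diff_swap[OF d]] by (simp add: P_diff)
    show "c' - P c' - (c - P c) \<in> F k"
      using F_diff[OF F_diff_swap[OF d] P_F[OF F_diff_swap[OF d]]] by (simp add: P_diff algebra_simps)
  qed (use c in \<open>simp_all add: P_F F_diff\<close>)
  then show ?thesis by (simp add: Phi_it_bch)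
qed

lemma chi_iter:
  assumes a: "a \<in> F 1"
  shows "(Phi_it a ^^ n) a \<in> F 1 \<and> (Phi_it a ^^ Suc n) a - (Phi_it a ^^ n) a \<in> F (Suc n)"
proof (induction n)
  case 0
  have "Phi_it a a \<in> F 1" by (rule Phi_it_in[OF a a])
  then show ?case using a by (simp add: F_diff)
next
  case (Suc n)
  have c1: "(Phi_it a ^^ Suc n) a \<in> F 1" using Phi_it_in[OF a conjunct1[OF Suc]] by simp
  have "Phi_it a ((Phi_it a ^^ Suc n) a) - Phi_it a ((Phi_it a ^^ n) a) \<in> F (Suc (Suc n))"
    by (rule Phi_it_diff) (use Suc c1 in auto)
  then show ?case using c1 by simp
qed

lemma bch_chi_props:
  assumes a: "a \<in> F 1"
  shows "bch_chi F lC P a \<in> F 1 \<and> lC (P (bch_chi F lC P a)) (bch_chi F lC P a - P (bch_chi F lC P a)) = a"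
proof -
  define c where "c n = (Phi_it a ^^ n) a" for n
  have it: "((\<lambda>c. a - (lC (P c) (c - P c) - P c - (c - P c))) ^^ n) a = c n" for n
    by (simp add: c_def Phi_it_def[abs_def])
  have cF: "c n \<in> F 1" for n using chi_iter[OF a] by (simp add: c_def)
  have cS: "c (Suc n) - c n \<in> F (Suc n)" for n using chi_iter[OF a] by (simp add: c_def)
  obtain chi where chi: "\<And>n. chi - c n \<in> F n"
    using complete_ex[of c] cS F_Suc by blast
  have eq: "bch_chi F lC P a = chi"
    unfolding bch_chi_def it by (rule flim_eqI[OF chi])
  have chiF: "chi \<in> F 1" using F_add[OF chi[of 1] cF[of 1]] by simp
  have fixp: "chi = Phi_it a chi"
  proof (rule hausdorff_diff)
    fix n
    show "chi - Phi_it a chi \<in> F n"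
    proof (cases n)
      case 0 then show ?thesis by simp
    next
      case (Suc m)
      have A: "chi - c (Suc m) \<in> F (Suc m)" by (rule chi)
      have cS': "c (Suc m) = Phi_it a (c m)" by (simp add: c_def)
      have B: "Phi_it a (c m) - Phi_it a chi \<in> F (Suc m)"
      proof (cases m)
        case 0
        then show ?thesis using Phi_it_in[OF a cF[of m]] Phi_it_in[OF a chiF] by (simp add: F_diff)
      next
        case (Suc j)
        have "Phi_it a (c m) - Phi_it a chi \<in> F (Suc m)"
          by (rule Phi_it_diff) (use Suc cF chiF F_diff_swap[OF chi[of m]] in auto)
        then show ?thesis .
      qed
      show ?thesis using F_add[OF A B] cS' Suc by simp
    qed
  qed
  have "lC (P chi) (chi - P chi) = a"
    using fixp unfolding Phi_it_def by (simp add: algebra_simps)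
  then show ?thesis using eq chiF by simp
qed

lemma bch_D_right_inverse: "a \<in> F 1 \<Longrightarrow> case_prod lC (bch_D F lC P a) = a"
  using bch_chi_props by (simp add: bch_D_def)

end

end

lemma bij_from_right_inverse:
  assumes "\<And>a. a \<in> B \<Longrightarrow> g (D a) = a"
  shows "bij_betw g (D ` B) B"
  by (rule bij_betw_byWitness[where f'=D]) (use assms in auto)

lemma finite_dynkin_words: "finite (dynkin_words M)"
proof (rule finite_subset)
  show "dynkin_words M \<subseteq> {ws. set ws \<subseteq> {..M} \<times> {..M} \<and> length ws \<le> M}"
  proof
    fix ws assume ws: "ws \<in> dynkin_words M"
    then have pos: "\<And>p. p \<in> set ws \<Longrightarrow> 0 < fst p + snd p" and s: "(\<Sum>p\<leftarrow>ws. fst p + snd p) = M"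
      by (auto simp: dynkin_words_def)
    have "length ws \<le> M" using length_le_sum_list[of ws "\<lambda>p. fst p + snd p"] pos s by fastforce
    moreover have "set ws \<subseteq> {..M} \<times> {..M}"
    proof
      fix q assume q: "q \<in> set ws"
      have "fst q + snd q \<le> M" using member_le_sum_list'[OF q, of "\<lambda>p. fst p + snd p"] s by simp
      then show "q \<in> {..M} \<times> {..M}" by (cases q) simp
    qed
    ultimately show "ws \<in> {ws. set ws \<subseteq> {..M} \<times> {..M} \<and> length ws \<le> M}" by simp
  qed
  show "finite {ws. set ws \<subseteq> {..M} \<times> {..M} \<and> length ws \<le> M}"
    by (rule finite_lists_length_le) simp
qed

lemma length_dl_dw: "ws \<in> dynkin_words M \<Longrightarrow> length (dl ws) = M"
  by (simp add: length_dl dynkin_words_def)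

lemma dynkin_letters_map: "dynkin_letters (lt u v False) (lt u v True) ws = map (lt u v) (dl ws)"
  by (induction ws) (simp_all add: dl_def dynkin_letters_def)

context cfa
begin

definition comm :: "'a \<Rightarrow> 'a \<Rightarrow> 'a" where "comm x y = x * y - y * x"

sublocale cm: fbr scale F comm
proof
  show "comm (x + y) z = comm x z + comm y z" for x y z by (simp add: comm_def algebra_simps)
  show "comm x (y + z) = comm x y + comm x z" for x y z by (simp add: comm_def algebra_simps)
  show "x \<in> F m \<Longrightarrow> y \<in> F n \<Longrightarrow> comm x y \<in> F (m + n)" for x y m n
    using F_mult[of x m y n] F_mult[of y n x m] by (simp add: comm_def F_diff add.commute)
qed

lemma rnB_comm: "rnB u v w = rnest comm (map (lt u v) w)"
  by (simp add: rnB_def comm_def[abs_def])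

lemma DT_scaled:
  assumes M: "1 \<le> M"
  shows "scale (of_nat M) (dynkin_term scale comm u v M) =
         (\<Sum>ws\<in>dynkin_words M. scale (cZ ws) (rnB u v (dl ws)))"
  unfolding dynkin_term_def scale_sum_right
proof (rule sum.cong[OF refl])
  fix ws assume ws: "ws \<in> dynkin_words M"
  have ne: "ws \<noteq> []" using ws by (simp add: dynkin_words_def)
  have "of_nat M * dynkin_coeff M ws = (cZ ws :: 'k)"
    using M ne by (simp add: dynkin_coeff_def cZ_def field_simps)
  moreover have "dynkin_letters u v ws = map (lt u v) (dl ws)"
    using dynkin_letters_map[of u v ws] by (simp add: lt_def)
  ultimately show "scale (of_nat M) (scale (dynkin_coeff M ws) (rnest comm (dynkin_letters u v ws))) =
      scale (cZ ws) (rnB u v (dl ws))"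
    by (simp add: rnB_comm)
qed

lemma SM_DT:
  assumes u: "u \<in> F 1" and v: "v \<in> F 1" and M: "1 \<le> M" "M \<le> N"
  shows "(\<Sum>w\<in>{w. length w = M}. scale (cf (ZZ :: 'k ser) (w,[])) (wB u v w)) - dynkin_term scale comm u v M \<in> F (Suc N)"
proof -
  let ?W = "{w::bool list. length w = M}"
  let ?S = "(\<Sum>w\<in>?W. scale (cf (ZZ :: 'k ser) (w,[])) (wB u v w))"
  have "scale (of_nat M) ?S = (\<Sum>w\<in>?W. scale (cf (theta (ZZ :: 'k ser)) (w,[])) (wB u v w))"
    unfolding scale_sum_right by (rule sum.cong[OF refl]) (simp add: theta_ZZ)
  also have "\<dots> = (\<Sum>w\<in>?W. \<Sum>w'\<in>?W. scale (cf (ZZ :: 'k ser) (w',[])) (scale (cf (rn w' :: 'k ser) (w,[])) (wB u v w)))"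
    by (rule sum.cong[OF refl]) (simp add: cf_theta scale_sum_left)
  also have "\<dots> = (\<Sum>w'\<in>?W. scale (cf (ZZ :: 'k ser) (w',[])) (\<Sum>w\<in>?W. scale (cf (rn w' :: 'k ser) (w,[])) (wB u v w)))"
    by (subst sum.swap) (simp add: scale_sum_right)
  also have "\<dots> = (\<Sum>w'\<in>?W. scale (cf (ZZ :: 'k ser) (w',[])) (evB u v N (rn w' :: 'k ser)))"
  proof (rule sum.cong[OF refl])
    fix w' assume w': "w' \<in> ?W"
    then have ne: "w' \<noteq> []" using M by auto
    show "scale (cf (ZZ :: 'k ser) (w',[])) (\<Sum>w\<in>?W. scale (cf (rn w' :: 'k ser) (w,[])) (wB u v w)) =
          scale (cf (ZZ :: 'k ser) (w',[])) (evB u v N (rn w' :: 'k ser))"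
      using evB_hom[OF _ M, of "rn w'" u v] hom_rn[OF ne] w' by simp
  qed
  finally have A: "scale (of_nat M) ?S = (\<Sum>w'\<in>?W. scale (cf (ZZ :: 'k ser) (w',[])) (evB u v N (rn w' :: 'k ser)))" .
  have B: "(\<Sum>w'\<in>?W. scale (cf (ZZ :: 'k ser) (w',[])) (evB u v N (rn w' :: 'k ser))) -
           (\<Sum>w'\<in>?W. scale (cf (ZZ :: 'k ser) (w',[])) (rnB u v w')) \<in> F (Suc N)"
  proof (rule F_diff_sum, rule F_diff_scale)
    fix w' assume w': "w' \<in> ?W"
    then have ne: "w' \<noteq> []" using M by auto
    show "evB u v N (rn w' :: 'k ser) - rnB u v w' \<in> F (Suc N)"
      by (rule evB_rn[OF u v ne]) (use w' M in simp)
  qed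
  have "(\<Sum>w'\<in>?W. scale (cf (ZZ :: 'k ser) (w',[])) (rnB u v w')) =
        (\<Sum>w'\<in>?W. \<Sum>ws\<in>{ws \<in> dynkin_words M. dl ws = w'}. scale (cZ ws) (rnB u v (dl ws)))"
  proof (rule sum.cong[OF refl])
    fix w' assume w': "w' \<in> ?W"
    show "scale (cf (ZZ :: 'k ser) (w',[])) (rnB u v w') =
          (\<Sum>ws\<in>{ws \<in> dynkin_words M. dl ws = w'}. scale (cZ ws) (rnB u v (dl ws)))"
      using w' by (simp add: ZZ_coeff scale_sum_left)
  qed
  also have "\<dots> = (\<Sum>ws\<in>dynkin_words M. scale (cZ ws) (rnB u v (dl ws)))"
    by (rule sum.group) (auto simp: finite_dynkin_words length_dl_dw)
  also have "\<dots> = scale (of_nat M) (dynkin_term scale comm u v M)"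
    by (rule DT_scaled[OF M(1), symmetric])
  finally have C: "(\<Sum>w'\<in>?W. scale (cf (ZZ :: 'k ser) (w',[])) (rnB u v w')) = scale (of_nat M) (dynkin_term scale comm u v M)" .
  have "scale (of_nat M) ?S - scale (of_nat M) (dynkin_term scale comm u v M) \<in> F (Suc N)"
    using B unfolding A C .
  then have "scale (1 / of_nat M) (scale (of_nat M) ?S - scale (of_nat M) (dynkin_term scale comm u v M)) \<in> F (Suc N)"
    by (rule F_scale)
  then show ?thesis using M by (simp add: scale_right_diff_distrib)
qed

lemma evB_ZZ_DT:
  assumes u: "u \<in> F 1" and v: "v \<in> F 1"
  shows "evB u v N (ZZ :: 'k ser) - (\<Sum>M<Suc N. dynkin_term scale comm u v M) \<in> F (Suc N)"
proof -
  have "evB u v N (ZZ :: 'k ser) = (\<Sum>M\<in>{1..N}. \<Sum>w\<in>{w\<in>W1 N. length w = M}. scale (cf (ZZ :: 'k ser) (w,[])) (wB u v w))"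
    unfolding evB_def by (rule sum.group[symmetric]) (auto simp: W1_def)
  also have "\<dots> = (\<Sum>M\<in>{1..N}. \<Sum>w\<in>{w. length w = M}. scale (cf (ZZ :: 'k ser) (w,[])) (wB u v w))"
    by (rule sum.cong[OF refl], rule sum.cong) (auto simp: W1_def)
  finally have e1: "evB u v N (ZZ :: 'k ser) = \<dots>" .
  have e2: "(\<Sum>M<Suc N. dynkin_term scale comm u v M) = (\<Sum>M\<in>{1..N}. dynkin_term scale comm u v M)"
  proof (rule sum.mono_neutral_right)
    show "\<forall>i\<in>{..<Suc N} - {1..N}. dynkin_term scale comm u v i = 0"
    proof
      fix i assume "i \<in> {..<Suc N} - {1..N}"
      then have "i = 0" by auto
      then show "dynkin_term scale comm u v i = 0" by simp
    qed
  qed auto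
  show ?thesis unfolding e1 e2
    by (rule F_diff_sum) (rule SM_DT[OF u v]; simp)
qed

theorem dynkin_exp:
  assumes u: "u \<in> F 1" and v: "v \<in> F 1"
  shows "Eb (cm.lC u v) = Eb u + Eb v + Eb u * Eb v"
proof (rule hausdorff_diff)
  fix n
  let ?c = "cm.lC u v"
  have c: "?c \<in> F 1" by (rule cm.lC_in[OF u v])
  have Eu: "Eb u \<in> F 1" and Ev: "Eb v \<in> F 1" and Ec: "Eb ?c \<in> F 1" using Eb_in u v c by auto
  show "Eb ?c - (Eb u + Eb v + Eb u * Eb v) \<in> F n"
  proof (cases "n \<le> 1")
    case True
    have "Eb ?c - (Eb u + Eb v + Eb u * Eb v) \<in> F 1"
      by (intro F_diff F_add Ec Eu Ev F_mult_left)
    then show ?thesis using True F_mono by blast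
  next
    case False
    then obtain N where n: "n = Suc N" and N: "1 \<le> N" by (cases n) auto
    let ?X = "texp XA - 1 :: 'k ser" and ?Y = "texp YA - 1 :: 'k ser"
    have X1: "inF 1 ?X" unfolding XA_def by (rule inF_texp1[OF inF_X1])
    have Y1: "inF 1 ?Y" unfolding YA_def by (rule inF_texp1[OF inF_X1])
    let ?z = "evB u v N (ZZ :: 'k ser)"
    have z: "?z \<in> F 1" by (rule evB_in[OF inF_ZZ u v])
    have i: "?c - ?z \<in> F (Suc N)"
      using F_diff_trans[OF cm.lC_trunc[OF u v, of "Suc N", folded cm.lC_def] F_diff_swap[OF evB_ZZ_DT[OF u v, of N]]]
      by (simp add: cm.lC_def)
    have ii: "Eb ?c - Eb ?z \<in> F (Suc N)" by (rule Eb_cong[OF c z i])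
    have iii: "Eb ?z - evB u v N (texp (ZZ :: 'k ser) - 1) \<in> F (Suc N)" by (rule Eb_evB[OF u v inF_ZZ])
    have gsplit: "texp (ZZ :: 'k ser) - 1 = ?X + ?Y + ?X * ?Y"
      by (simp add: texp_ZZ gg_def algebra_simps)
    have iv: "evB u v N (texp (ZZ :: 'k ser) - 1) - (evB u v N ?X + evB u v N ?Y + evB u v N ?X * evB u v N ?Y) \<in> F (Suc N)"
      unfolding gsplit evB_add using evB_mult[OF u v X1 Y1, of N] by simp
    have eu: "Eb u - evB u v N ?X \<in> F (Suc N)"
      using Eb_evB[OF u v inF_X1[of False], of N] by (simp add: evB_X1[OF N] lt_def XA_def)
    have ev: "Eb v - evB u v N ?Y \<in> F (Suc N)"
      using Eb_evB[OF u v inF_X1[of True], of N] by (simp add: evB_X1[OF N] lt_def YA_def)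
    have vi: "(Eb u + Eb v + Eb u * Eb v) - (evB u v N ?X + evB u v N ?Y + evB u v N ?X * evB u v N ?Y) \<in> F (Suc N)"
      by (intro F_diff_add F_diff_mult eu ev)
    have "Eb ?c - (Eb u + Eb v + Eb u * Eb v) \<in> F (Suc N)"
      by (rule F_diff_trans[OF F_diff_trans[OF F_diff_trans[OF ii iii] iv] F_diff_swap[OF vi]])
    then show ?thesis using n by simp
  qed
qed

end

lemma lin_facts:
  assumes "Vector_Spaces.linear s1 s2 f"
  shows "f (x + y) = f x + f y" "f (s1 c x) = s2 c (f x)" "f (x - y) = f x - f y" "f 0 = 0"
    "f (sum g A) = (\<Sum>i\<in>A. f (g i))"
proof -
  interpret L: Vector_Spaces.linear s1 s2 f by fact
  show "f (x + y) = f x + f y" by (rule L.add)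
  show "f (s1 c x) = s2 c (f x)" by (rule L.scale)
  show "f (x - y) = f x - f y" by (rule L.diff)
  show "f 0 = 0" by (rule L.zero)
  show "f (sum g A) = (\<Sum>i\<in>A. f (g i))" by (rule L.sum)
qed

context fbr
begin

lemma bch_chi_cong:
  assumes PF: "\<And>n x. x \<in> F n \<Longrightarrow> P x \<in> F n" and Pd: "\<And>x y. P (x - y) = P x - P y"
    and CC: "\<And>x y. x \<in> F 1 \<Longrightarrow> y \<in> F 1 \<Longrightarrow> C x y = lC x y"
    and a: "a \<in> F 1"
  shows "bch_chi F C P a = bch_chi F lC P a"
proof -
  let ?f = "\<lambda>C c. a - (C (P c) (c - P c) - P c - (c - P c))"
  have "(?f C ^^ n) a = (?f lC ^^ n) a \<and> (?f lC ^^ n) a \<in> F 1" for n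
  proof (induction n)
    case 0 then show ?case using a by simp
  next
    case (Suc n)
    let ?c = "(?f lC ^^ n) a"
    have c: "?c \<in> F 1" using Suc by simp
    have "?f C ?c = ?f lC ?c" using CC[OF PF[OF c] F_diff[OF c PF[OF c]]] by simp
    moreover have "?f lC ?c \<in> F 1"
    proof -
      have eq: "?f lC ?c = a - bch (P ?c) (?c - P ?c)" by (simp add: bch_def)
      have B: "bch (P ?c) (?c - P ?c) \<in> F 1"
        by (rule F_mono[OF _ bch_in[OF PF[OF c] F_diff[OF c PF[OF c]]]]) simp
      show ?thesis unfolding eq by (rule F_diff[OF a B])
    qed
    ultimately show ?case using Suc by simp
  qed
  then show ?thesis unfolding bch_chi_def by simp
qed

end

lemma umult_1: "umult scale (1, x) (1, y) = (1, x + y + x * y)" if "vector_space scale"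
proof -
  interpret vector_space scale by fact
  show ?thesis by (simp add: umult_def add.commute)
qed

lemma rnest_hom:
  assumes lin: "Vector_Spaces.linear s1 s2 \<phi>" and h: "\<And>x y. \<phi> (br x y) = \<phi> x * \<phi> y - \<phi> y * \<phi> x"
  shows "\<phi> (rnest br zs) = rnest (\<lambda>x y. x * y - y * x) (map \<phi> zs)"
proof (induction zs rule: induct_list012)
  case 1 then show ?case using lin_facts(4)[OF lin] by simp
next
  case (3 a b zs) then show ?case by (simp add: h)
qed simp

lemma dynkin_letters_map': "map f (dynkin_letters x y ws) = dynkin_letters (f x) (f y) ws"
  by (induction ws) (simp_all add: dynkin_letters_def)

lemma (in cfa) uexp_lC:
  assumes x: "x \<in> F 1" and y: "y \<in> F 1"
  shows "uexp scale F (cm.lC x y) = umult scale (uexp scale F x) (uexp scale F y)"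
  by (simp add: uexp_eq dynkin_exp[OF x y] umult_1[OF vs])

lemma (in cfa) assoc_C_eq:
  assumes x: "x \<in> F 1" and y: "y \<in> F 1"
  shows "assoc_C scale F x y = cm.lC x y"
  unfolding assoc_C_def
proof (rule the_equality)
  show "cm.lC x y \<in> F 1 \<and> uexp scale F (cm.lC x y) = umult scale (uexp scale F x) (uexp scale F y)"
    using cm.lC_in[OF x y] uexp_lC[OF x y] by simp
  fix c assume c: "c \<in> F 1 \<and> uexp scale F c = umult scale (uexp scale F x) (uexp scale F y)"
  then have "uexp scale F c = uexp scale F (cm.lC x y)" using uexp_lC[OF x y] by simp
  then have "Eb c = Eb (cm.lC x y)" by (simp add: uexp_eq)
  then show "c = cm.lC x y" by (rule Eb_inj[OF conjunct1[OF c] cm.lC_in[OF x y]])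
qed

lemma (in fbr) DT_hom:
  assumes lin: "Vector_Spaces.linear scale s2 \<phi>" and h: "\<And>x y. \<phi> (br x y) = \<phi> x * \<phi> y - \<phi> y * \<phi> x"
  shows "\<phi> (dynkin_term scale br x y N) = dynkin_term s2 (\<lambda>x y. x * y - y * x) (\<phi> x) (\<phi> y) N"
  unfolding dynkin_term_def lin_facts(5)[OF lin] lin_facts(2)[OF lin] rnest_hom[OF lin h]
  by (simp add: dynkin_letters_map')

theorem theorem2p3:
  fixes scale :: "'k::field_char_0 \<Rightarrow> 'a::ring \<Rightarrow> 'a"
    and F :: "nat \<Rightarrow> 'a set" and P :: "'a \<Rightarrow> 'a"
    and scaleL :: "'k \<Rightarrow> 'l::ab_group_add \<Rightarrow> 'l" and br :: "'l \<Rightarrow> 'l \<Rightarrow> 'l"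
    and FL :: "nat \<Rightarrow> 'l set" and PL :: "'l \<Rightarrow> 'l"
  shows
  \<comment> \<open>Case 1: A is a complete filtered associative algebra\<close>
  "(cf_assoc_algebra scale F \<and> Vector_Spaces.linear scale scale P \<and> (\<forall>n. P ` F n \<subseteq> F n) \<longrightarrow>
     (\<forall>a\<in>F 1. uexp scale F a =
                umult scale (uexp scale F (fst (bch_D F (assoc_C scale F) P a)))
                            (uexp scale F (snd (bch_D F (assoc_C scale F) P a)))) \<and>
     (\<forall>a\<in>F 1. case_prod (assoc_C scale F) (bch_D F (assoc_C scale F) P a) = a) \<and>
     bij_betw (case_prod (assoc_C scale F)) (bch_D F (assoc_C scale F) P ` F 1) (F 1) \<and>
     (\<forall>B. B \<subseteq> F 1 \<longrightarrow>
        bij_betw (case_prod (assoc_C scale F)) (bch_D F (assoc_C scale F) P ` B) B))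
   \<and>
  \<comment> \<open>Case 2: A is a complete filtered Lie algebra; exp is taken in (the completion of) U(A),
      expressed through every filtration-preserving Lie morphism phi into a complete filtered
      associative algebra (of arbitrary type 'b)\<close>
   (cf_lie_algebra scaleL br FL \<and> Vector_Spaces.linear scaleL scaleL PL \<and> (\<forall>n. PL ` FL n \<subseteq> FL n) \<longrightarrow>
     (\<forall>a\<in>FL 1. \<forall>(scaleB :: 'k \<Rightarrow> 'b::ring \<Rightarrow> 'b) FB (\<phi> :: 'l \<Rightarrow> 'b).
        cf_assoc_algebra scaleB FB \<and> Vector_Spaces.linear scaleL scaleB \<phi> \<and>
        (\<forall>x y. \<phi> (br x y) = \<phi> x * \<phi> y - \<phi> y * \<phi> x) \<and> (\<forall>n. \<phi> ` FL n \<subseteq> FB n) \<longrightarrow>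
        uexp scaleB FB (\<phi> a) =
          umult scaleB (uexp scaleB FB (\<phi> (fst (bch_D FL (lie_C scaleL br FL) PL a))))
                       (uexp scaleB FB (\<phi> (snd (bch_D FL (lie_C scaleL br FL) PL a))))) \<and>
     (\<forall>a\<in>FL 1. case_prod (lie_C scaleL br FL) (bch_D FL (lie_C scaleL br FL) PL a) = a) \<and>
     bij_betw (case_prod (lie_C scaleL br FL)) (bch_D FL (lie_C scaleL br FL) PL ` FL 1) (FL 1) \<and>
     (\<forall>B. B \<subseteq> FL 1 \<longrightarrow>
        bij_betw (case_prod (lie_C scaleL br FL)) (bch_D FL (lie_C scaleL br FL) PL ` B) B))"
proof -
  have part1: "cf_assoc_algebra scale F \<and> Vector_Spaces.linear scale scale P \<and> (\<forall>n. P ` F n \<subseteq> F n) \<longrightarrow>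
     (\<forall>a\<in>F 1. uexp scale F a =
                umult scale (uexp scale F (fst (bch_D F (assoc_C scale F) P a)))
                            (uexp scale F (snd (bch_D F (assoc_C scale F) P a)))) \<and>
     (\<forall>a\<in>F 1. case_prod (assoc_C scale F) (bch_D F (assoc_C scale F) P a) = a) \<and>
     bij_betw (case_prod (assoc_C scale F)) (bch_D F (assoc_C scale F) P ` F 1) (F 1) \<and>
     (\<forall>B. B \<subseteq> F 1 \<longrightarrow>
        bij_betw (case_prod (assoc_C scale F)) (bch_D F (assoc_C scale F) P ` B) B)"
  proof
    assume h1: "cf_assoc_algebra scale F \<and> Vector_Spaces.linear scale scale P \<and> (\<forall>n. P ` F n \<subseteq> F n)"
    interpret A: cfa scale F using h1 by (simp add: cfa_def)
    have lin: "Vector_Spaces.linear scale scale P" using h1 by simp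
    have PF: "\<And>n x. x \<in> F n \<Longrightarrow> P x \<in> F n" using h1 by blast
    have Pd: "\<And>x y. P (x - y) = P x - P y" by (rule lin_facts(3)[OF lin])
    let ?D = "bch_D F (assoc_C scale F) P"
    have Deq: "?D a = (P (bch_chi F A.cm.lC P a), bch_chi F A.cm.lC P a - P (bch_chi F A.cm.lC P a))"
      if a: "a \<in> F 1" for a
    proof -
      have "bch_chi F (assoc_C scale F) P a = bch_chi F A.cm.lC P a"
        by (rule A.cm.bch_chi_cong[OF PF Pd A.assoc_C_eq a])
      then show ?thesis by (simp add: bch_D_def)
    qed
    have Din: "fst (?D a) \<in> F 1 \<and> snd (?D a) \<in> F 1 \<and> A.cm.lC (fst (?D a)) (snd (?D a)) = a"
      if a: "a \<in> F 1" for a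
    proof -
      have p: "bch_chi F A.cm.lC P a \<in> F 1 \<and>
        A.cm.lC (P (bch_chi F A.cm.lC P a)) (bch_chi F A.cm.lC P a - P (bch_chi F A.cm.lC P a)) = a"
        by (rule A.cm.bch_chi_props[OF Pd PF a])
      then show ?thesis unfolding Deq[OF a] fst_conv snd_conv using PF A.F_diff by blast
    qed
    have R: "case_prod (assoc_C scale F) (?D a) = a" if a: "a \<in> F 1" for a
      using Din[OF a] A.assoc_C_eq[of "fst (?D a)" "snd (?D a)"] by (simp add: case_prod_beta)
    show "(\<forall>a\<in>F 1. uexp scale F a = umult scale (uexp scale F (fst (?D a))) (uexp scale F (snd (?D a)))) \<and>
     (\<forall>a\<in>F 1. case_prod (assoc_C scale F) (?D a) = a) \<and>
     bij_betw (case_prod (assoc_C scale F)) (?D ` F 1) (F 1) \<and>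
     (\<forall>B. B \<subseteq> F 1 \<longrightarrow> bij_betw (case_prod (assoc_C scale F)) (?D ` B) B)"
    proof (intro conjI ballI allI impI)
      fix a assume a: "a \<in> F 1"
      show "uexp scale F a = umult scale (uexp scale F (fst (?D a))) (uexp scale F (snd (?D a)))"
        using A.uexp_lC[of "fst (?D a)" "snd (?D a)"] Din[OF a] by simp
    next
      fix a assume a: "a \<in> F 1"
      show "case_prod (assoc_C scale F) (?D a) = a" by (rule R[OF a])
    next
      show "bij_betw (case_prod (assoc_C scale F)) (?D ` F 1) (F 1)"
        by (rule bij_from_right_inverse) (rule R)
    next
      fix B assume B: "B \<subseteq> F 1"
      show "bij_betw (case_prod (assoc_C scale F)) (?D ` B) B"
        by (rule bij_from_right_inverse) (use R B in blast)
    qed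
  qed
  have part2: "cf_lie_algebra scaleL br FL \<and> Vector_Spaces.linear scaleL scaleL PL \<and> (\<forall>n. PL ` FL n \<subseteq> FL n) \<longrightarrow>
     (\<forall>a\<in>FL 1. \<forall>(scaleB :: 'k \<Rightarrow> 'b::ring \<Rightarrow> 'b) FB (\<phi> :: 'l \<Rightarrow> 'b).
        cf_assoc_algebra scaleB FB \<and> Vector_Spaces.linear scaleL scaleB \<phi> \<and>
        (\<forall>x y. \<phi> (br x y) = \<phi> x * \<phi> y - \<phi> y * \<phi> x) \<and> (\<forall>n. \<phi> ` FL n \<subseteq> FB n) \<longrightarrow>
        uexp scaleB FB (\<phi> a) =
          umult scaleB (uexp scaleB FB (\<phi> (fst (bch_D FL (lie_C scaleL br FL) PL a))))
                       (uexp scaleB FB (\<phi> (snd (bch_D FL (lie_C scaleL br FL) PL a))))) \<and>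
     (\<forall>a\<in>FL 1. case_prod (lie_C scaleL br FL) (bch_D FL (lie_C scaleL br FL) PL a) = a) \<and>
     bij_betw (case_prod (lie_C scaleL br FL)) (bch_D FL (lie_C scaleL br FL) PL ` FL 1) (FL 1) \<and>
     (\<forall>B. B \<subseteq> FL 1 \<longrightarrow>
        bij_betw (case_prod (lie_C scaleL br FL)) (bch_D FL (lie_C scaleL br FL) PL ` B) B)"
  proof
    assume h2: "cf_lie_algebra scaleL br FL \<and> Vector_Spaces.linear scaleL scaleL PL \<and> (\<forall>n. PL ` FL n \<subseteq> FL n)"
    have la: "lie_algebra scaleL br" using h2 by (simp add: cf_lie_algebra_def)
    interpret L: fbr scaleL FL br
      using h2 la unfolding fbr_def fbr_axioms_def filt_def cf_lie_algebra_def lie_algebra_def by blast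
    have linL: "Vector_Spaces.linear scaleL scaleL PL" using h2 by simp
    have PF: "\<And>n x. x \<in> FL n \<Longrightarrow> PL x \<in> FL n" using h2 by blast
    have Pd: "\<And>x y. PL (x - y) = PL x - PL y" by (rule lin_facts(3)[OF linL])
    have lCeq: "lie_C scaleL br FL = L.lC" by (simp add: L.lC_def[abs_def])
    let ?D = "bch_D FL L.lC PL"
    have Din: "fst (?D a) \<in> FL 1 \<and> snd (?D a) \<in> FL 1 \<and> L.lC (fst (?D a)) (snd (?D a)) = a"
      if a: "a \<in> FL 1" for a
    proof -
      have p: "bch_chi FL L.lC PL a \<in> FL 1 \<and>
        L.lC (PL (bch_chi FL L.lC PL a)) (bch_chi FL L.lC PL a - PL (bch_chi FL L.lC PL a)) = a"
        by (rule L.bch_chi_props[OF Pd PF a])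
      then show ?thesis unfolding bch_D_def fst_conv snd_conv using PF L.F_diff by blast
    qed
    have R: "case_prod L.lC (?D a) = a" if a: "a \<in> FL 1" for a
      using Din[OF a] by (simp add: case_prod_beta)
    show "(\<forall>a\<in>FL 1. \<forall>(scaleB :: 'k \<Rightarrow> 'b::ring \<Rightarrow> 'b) FB (\<phi> :: 'l \<Rightarrow> 'b).
        cf_assoc_algebra scaleB FB \<and> Vector_Spaces.linear scaleL scaleB \<phi> \<and>
        (\<forall>x y. \<phi> (br x y) = \<phi> x * \<phi> y - \<phi> y * \<phi> x) \<and> (\<forall>n. \<phi> ` FL n \<subseteq> FB n) \<longrightarrow>
        uexp scaleB FB (\<phi> a) =
          umult scaleB (uexp scaleB FB (\<phi> (fst (bch_D FL (lie_C scaleL br FL) PL a))))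
                       (uexp scaleB FB (\<phi> (snd (bch_D FL (lie_C scaleL br FL) PL a))))) \<and>
     (\<forall>a\<in>FL 1. case_prod (lie_C scaleL br FL) (bch_D FL (lie_C scaleL br FL) PL a) = a) \<and>
     bij_betw (case_prod (lie_C scaleL br FL)) (bch_D FL (lie_C scaleL br FL) PL ` FL 1) (FL 1) \<and>
     (\<forall>B. B \<subseteq> FL 1 \<longrightarrow>
        bij_betw (case_prod (lie_C scaleL br FL)) (bch_D FL (lie_C scaleL br FL) PL ` B) B)"
      unfolding lCeq
    proof (intro conjI ballI allI impI)
      fix a and scaleB :: "'k \<Rightarrow> 'b::ring \<Rightarrow> 'b" and FB and \<phi> :: "'l \<Rightarrow> 'b"
      assume a: "a \<in> FL 1"
        and hB: "cf_assoc_algebra scaleB FB \<and> Vector_Spaces.linear scaleL scaleB \<phi> \<and>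
          (\<forall>x y. \<phi> (br x y) = \<phi> x * \<phi> y - \<phi> y * \<phi> x) \<and> (\<forall>n. \<phi> ` FL n \<subseteq> FB n)"
      interpret B: cfa scaleB FB using hB by (simp add: cfa_def)
      have linphi: "Vector_Spaces.linear scaleL scaleB \<phi>" using hB by simp
      have hphi: "\<And>x y. \<phi> (br x y) = \<phi> x * \<phi> y - \<phi> y * \<phi> x" using hB by simp
      have phiF: "\<And>n x. x \<in> FL n \<Longrightarrow> \<phi> x \<in> FB n" using hB by blast
      let ?x = "fst (?D a)" and ?y = "snd (?D a)"
      have x: "?x \<in> FL 1" and y: "?y \<in> FL 1" and axy: "L.lC ?x ?y = a" using Din[OF a] by auto
      have px: "\<phi> ?x \<in> FB 1" and py: "\<phi> ?y \<in> FB 1" using phiF x y by auto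
      have commeq: "B.comm = (\<lambda>x y. x * y - y * x)" by (simp add: B.comm_def[abs_def])
      have phiC: "\<phi> (L.lC ?x ?y) = B.cm.lC (\<phi> ?x) (\<phi> ?y)"
      proof (rule B.hausdorff_diff)
        fix n
        have A1: "\<phi> (L.lC ?x ?y) - (\<Sum>i<n. dynkin_term scaleB B.comm (\<phi> ?x) (\<phi> ?y) i) \<in> FB n"
        proof -
          have "\<phi> (L.lC ?x ?y - (\<Sum>i<n. dynkin_term scaleL br ?x ?y i)) \<in> FB n"
            by (rule phiF[OF L.lC_trunc[OF x y]])
          then show ?thesis
            by (simp add: lin_facts(3,5)[OF linphi] L.DT_hom[OF linphi hphi] commeq)
        qed
        have A2: "B.cm.lC (\<phi> ?x) (\<phi> ?y) - (\<Sum>i<n. dynkin_term scaleB B.comm (\<phi> ?x) (\<phi> ?y) i) \<in> FB n"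
          by (rule B.cm.lC_trunc[OF px py])
        show "\<phi> (L.lC ?x ?y) - B.cm.lC (\<phi> ?x) (\<phi> ?y) \<in> FB n"
          by (rule B.F_diff_trans[OF A1 B.F_diff_swap[OF A2]])
      qed
      show "uexp scaleB FB (\<phi> a) = umult scaleB (uexp scaleB FB (\<phi> ?x)) (uexp scaleB FB (\<phi> ?y))"
        using B.uexp_lC[OF px py] phiC axy by simp
    next
      fix a assume a: "a \<in> FL 1"
      show "case_prod L.lC (?D a) = a" by (rule R[OF a])
    next
      show "bij_betw (case_prod L.lC) (?D ` FL 1) (FL 1)"
        by (rule bij_from_right_inverse) (rule R)
    next
      fix B assume B: "B \<subseteq> FL 1"
      show "bij_betw (case_prod L.lC) (?D ` B) B"
        by (rule bij_from_right_inverse) (use R B in blast)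
    qed
  qed
  show ?thesis using part1 part2 by blast
qed

end
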